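(* Under Assumptions 1 and 2, for the accurate-gradient algorithm, for every $i\in\mathcal V$ and $t\in\{1,\dots,T\}$: (i) $\|x_i(t)-\bar x(t)\|\le\rho_1\lambda^t+\rho_2\sum_{s=0}^t\lambda^{t-s}\eta_s$; (ii) $\|x_i(t)-\bar x(t)\|^2\le\rho_3\lambda^t+\rho_4\sum_{s=0}^t\lambda^{t-s}\eta_s^2$; (iii) $\|x_i(t+1)-x_i(t)\|\le2\rho_1\lambda^t+2\rho_2\sum_{s=0}^t\lambda^{t-s}\eta_s+\rho_5\eta_t$; (iv) $\|y_i(t)-\bar y(t)\|\le\rho_6\sum_{s=0}^t\lambda^{t-s}\eta_s$; (v) $\|y_i(t)-\bar y(t)\|^2\le\rho_7\sum_{s=0}^t\lambda^{t-s}\eta_s^2$, where $\bar x(t)=\frac1n\sum_ix_i(t)$, $\bar y(t)=\frac1n\sum_iy_i(t)$, $\rho_1=\sqrt m\,n\kappa\mathcal C$, $\rho_2=\frac{\sqrt m\,n^{3/2}h\kappa_2\kappa_3\mathcal C+\sqrt m\,n\kappa_1\mathcal C}{\mu\lambda}$, $\rho_3=mn^2\kappa^2\mathcal C^2+\frac{2mn^{5/2}h\kappa\kappa_2\kappa_3\mathcal C^2+2mn^2\kappa\kappa_1\mathcal C^2}{\mu\lambda(1-\lambda)}$, $\rho_4=\frac{m(n^{3/2}h\kappa_2\kappa_3\mathcal C+n\kappa_1\mathcal C)^2}{\mu^2\lambda^2(1-\lambda)}$, $\rho_5=\frac{\sqrt n\,h\kappa_2\kappa_3+\kappa_1}{\mu}$,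 $\rho_6=\frac{\sqrt h\,n^{3/2}\mathcal C\kappa_2+\sqrt h\,n\mathcal C\kappa_2}{\lambda}$, $\rho_7=\frac{h(n^{3/2}\mathcal C\kappa_2+n\mathcal C\kappa_2)^2}{\lambda^2}$.
   Context: Network: Let $n\ge2$, $\mathcal V=\{1,\dots,n\}$. For $t=0,1,2,\dots$, $\mathcal G(t)=(\mathcal V,\mathcal E(t),A(t))$ is a digraph with weight matrix $A(t)=(a_{ij}(t))_{n\times n}$, where for some $\gamma>0$, $\gamma\le a_{ij}(t)\le1$ if $(j,i)\in\mathcal E(t)$ and $a_{ij}(t)=0$ otherwise; $\mathcal N_i(t)=\{j:(j,i)\in\mathcal E(t)\}$ and $i\in\mathcal N_i(t)$. Assumption 1: there is an integer $U>0$ such that for every $t\ge0$ the digraph $(\mathcal V,\bigcup_{k=tU}^{(t+1)U-1}\mathcal E(k))$ is strongly connected, and $A(t)1_n=A(t)^T1_n=1_n$ for all $t$. Constants: $\lambda=(1-\gamma^{(n-1)U})^{1/((n-1)U)}$ and $\mathcal C=2\lambda^{-1}(1+\gamma^{-(n-1)U})/(1-\gamma^{(n-1)U})$. Problem: $\Omega\subset\mathbb R^m$ is convex; for each $i\in\mathcal V$ and $t\ge0$, $f_i^t:\Omega\times\Omega\to\mathbb R$ and $g_i^t=(g_{i1}^t,\dots,g_{ih}^t)^T:\Omega\to\mathbb R^h$; $\mathcal X^t=\{x\in\Omega:\sum_ig_i^t(x)\le0\}$; $\nabla_2$ is the gradient in the second argument; $\nabla g_i^t(x)=[\nabla g_{i1}^t(x),\dots,\nabla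 g_{ih}^t(x)]\in\mathbb R^{m\times h}$. Assumption 2: (i) $f_i^t(x,\cdot)$ convex, each $g_{ik}^t$ convex (differentiable); (ii) $\mathcal X^t\neq\emptyset$, $\Omega$ compact with $\|x\|\le\kappa$ on $\Omega$; (iii) $\|\nabla_2f_i^t(x,y)\|\le\kappa_1$, $\|g_i^t(x)\|\le\kappa_2$, $\|\nabla g_{ik}^t(x)\|\le\kappa_3$ on $\Omega$. Algorithm: $\phi:\mathbb R^m\to\mathbb R$ differentiable and $\mu$-strongly convex ($\mu>0$), $\mathcal D_\phi(x,y)=\phi(x)-\phi(y)-\langle\nabla\phi(y),x-y\rangle$. Non-increasing step sizes $\zeta_t,\eta_t\in(0,1]$ with $\zeta_t\le\eta_t$; $x_i(0)\in\Omega$, $y_i(0)=0\in\mathbb R^h$; for $t\ge0$: $z_i(t)=\sum_{j\in\mathcal N_i(t)}a_{ij}(t)x_j(t)$; $x_i(t+1)=\arg\min_{x\in\Omega}\{\mathcal D_\phi(x,z_i(t))+\langle\zeta_t\nabla_2f_i^t(x_i(t),x_i(t))+\eta_t\nabla g_i^t(x_i(t))y_i(t),x\rangle\}$; $y_i(t+1)=[(1-\eta_t)\sum_{j\in\mathcal N_i(t)}a_{ij}(t)y_j(t)+\eta_tg_i^t(x_i(t))]_+$. $T$ is the time horizon. *)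

theory Defs
  imports "HOL-Analysis.Analysis"
begin

definition strongly_convex :: "real \<Rightarrow> ('a::real_inner \<Rightarrow> real) \<Rightarrow> bool" where
  "strongly_convex mu phi \<longleftrightarrow>
     (\<forall>x y u. 0 \<le> u \<longrightarrow> u \<le> 1 \<longrightarrow>
        phi (u *\<^sub>R x + (1 - u) *\<^sub>R y) \<le> u * phi x + (1 - u) * phi y - mu / 2 * u * (1 - u) * (norm (x - y))\<^sup>2)"

definition bregman :: "('a::real_inner \<Rightarrow> real) \<Rightarrow> ('a \<Rightarrow> 'a) \<Rightarrow> 'a \<Rightarrow> 'a \<Rightarrow> real" where
  "bregman phi dphi x y = phi x - phi y - inner (dphi y) (x - y)"

definition strongly_connected :: "nat set \<Rightarrow> (nat \<times> nat) set \<Rightarrow> bool" where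
  "strongly_connected V E \<longleftrightarrow> (\<forall>i\<in>V. \<forall>j\<in>V. (i, j) \<in> (E \<inter> (V \<times> V))\<^sup>*)"

definition pospart :: "real ^ 'h \<Rightarrow> real ^ 'h" where
  "pospart v = (\<chi> k. max (v $ k) 0)"

definition lam :: "real \<Rightarrow> nat \<Rightarrow> nat \<Rightarrow> real" where
  "lam \<gamma> n U = (1 - \<gamma> ^ ((n - 1) * U)) powr (1 / real ((n - 1) * U))"

definition Cconst :: "real \<Rightarrow> nat \<Rightarrow> nat \<Rightarrow> real" where
  "Cconst \<gamma> n U = 2 / lam \<gamma> n U * (1 + 1 / \<gamma> ^ ((n - 1) * U)) / (1 - \<gamma> ^ ((n - 1) * U))"

end

theory Submission
  imports Defs
begin

lemma rtrancl_leave: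
  assumes "(x, y) \<in> R\<^sup>*" "x \<in> S" "y \<notin> S"
  shows "\<exists>u v. (u, v) \<in> R \<and> u \<in> S \<and> v \<notin> S"
  using assms by (induction rule: rtrancl_induct) auto

lemma contract:
  fixes Q :: "nat \<Rightarrow> nat \<Rightarrow> real"
  assumes n1: "n \<ge> 1"
    and Qd: "\<And>i j. i < n \<Longrightarrow> j < n \<Longrightarrow> Q i j \<ge> d" and d0: "d \<ge> 0"
    and Qrow: "\<And>i. i < n \<Longrightarrow> (\<Sum>j<n. Q i j) = 1"
    and v: "\<And>l. l < n \<Longrightarrow> lo \<le> v l \<and> v l \<le> lo + W" and W0: "W \<ge> 0"
  shows "\<forall>i<n. lo + d * (\<Sum>j<n. v j - lo) \<le> (\<Sum>j<n. Q i j * v j)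
              \<and> (\<Sum>j<n. Q i j * v j) \<le> lo + d * (\<Sum>j<n. v j - lo) + (1 - d) * W"
proof (intro allI impI)
  fix i assume i: "i < n"
  have eq: "(\<Sum>j<n. Q i j * v j) = lo + (\<Sum>j<n. Q i j * (v j - lo))"
    using Qrow[OF i] by (simp add: right_diff_distrib sum_subtractf sum_distrib_right[symmetric])
  have low: "(\<Sum>j<n. d * (v j - lo)) \<le> (\<Sum>j<n. Q i j * (v j - lo))"
    by (intro sum_mono mult_right_mono) (auto simp: Qd i v)
  have "(\<Sum>j<n. Q i j * (v j - lo)) = (\<Sum>j<n. (Q i j - d) * (v j - lo)) + (\<Sum>j<n. d * (v j - lo))"
    by (simp add: sum.distrib[symmetric] algebra_simps)
  also have "(\<Sum>j<n. (Q i j - d) * (v j - lo)) \<le> (\<Sum>j<n. (Q i j - d) * W)"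
    by (intro sum_mono mult_left_mono) (use v Qd i in fastforce)+
  also have "(\<Sum>j<n. (Q i j - d) * W) = (1 - n * d) * W"
    using Qrow[OF i] by (simp add: sum_distrib_right[symmetric] sum_subtractf)
  also have "(1 - n * d) * W \<le> (1 - d) * W"
    using n1 d0 W0 by (intro mult_right_mono) (auto simp: mult_le_cancel_right1 intro: mult_right_mono[of 1 "real n" d, simplified])
  finally have up: "(\<Sum>j<n. Q i j * (v j - lo)) \<le> (1 - d) * W + (\<Sum>j<n. d * (v j - lo))" by simp
  show "lo + d * (\<Sum>j<n. v j - lo) \<le> (\<Sum>j<n. Q i j * v j)
              \<and> (\<Sum>j<n. Q i j * v j) \<le> lo + d * (\<Sum>j<n. v j - lo) + (1 - d) * W"
    using low up eq by (simp add: sum_distrib_left)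
qed

locale mix =
  fixes n U :: nat and \<gamma> :: real and E :: "nat \<Rightarrow> (nat \<times> nat) set" and a :: "nat \<Rightarrow> nat \<Rightarrow> nat \<Rightarrow> real"
  assumes n2: "n \<ge> 2"
    and gamma_pos: "\<gamma> > 0"
    and E_sub: "\<And>t. E t \<subseteq> {..<n} \<times> {..<n}"
    and a_edge: "\<And>t i j. (j, i) \<in> E t \<Longrightarrow> \<gamma> \<le> a i j t \<and> a i j t \<le> 1"
    and a_nonedge: "\<And>t i j. (j, i) \<notin> E t \<Longrightarrow> a i j t = 0"
    and self_loop: "\<And>t i. i < n \<Longrightarrow> (i, i) \<in> E t"
    and U_pos: "U > 0"
    and conn: "\<And>t. strongly_connected {..<n} (\<Union>k\<in>{t * U..<(t + 1) * U}. E k)"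
    and row_stoch: "\<And>t i. i < n \<Longrightarrow> (\<Sum>j<n. a i j t) = 1"
    and col_stoch: "\<And>t j. j < n \<Longrightarrow> (\<Sum>i<n. a i j t) = 1"
begin

lemma a_nonneg: "a i j t \<ge> 0"
  using a_edge a_nonedge gamma_pos by (cases "(j, i) \<in> E t") (force+)

fun iterV :: "nat \<Rightarrow> nat \<Rightarrow> (nat \<Rightarrow> 'v::real_vector) \<Rightarrow> nat \<Rightarrow> 'v" where
  "iterV s 0 v = v"
| "iterV s (Suc L) v = (\<lambda>i. \<Sum>l<n. a i l (s + L) *\<^sub>R iterV s L v l)"

lemma iterV_add: "iterV s (L1 + L2) v = iterV (s + L1) L2 (iterV s L1 v)"
  by (induction L2) (simp_all add: add.assoc)

definition P :: "nat \<Rightarrow> nat \<Rightarrow> nat \<Rightarrow> nat \<Rightarrow> real" where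
  "P s L i j = iterV s L (\<lambda>l. if l = j then (1::real) else 0) i"

lemma P_Suc: "P s (Suc L) i j = (\<Sum>l<n. a i l (s + L) * P s L l j)"
  by (simp add: P_def)

lemma iterV_P:
  fixes v :: "nat \<Rightarrow> 'v::real_vector"
  assumes "i < n"
  shows "iterV s L v i = (\<Sum>j<n. P s L i j *\<^sub>R v j)"
  using assms
proof (induction L arbitrary: i)
  case 0
  have "(\<Sum>j<n. P s 0 i j *\<^sub>R v j) = (\<Sum>j<n. (if j = i then v j else 0))"
    by (intro sum.cong) (auto simp: P_def)
  then show ?case using 0 by simp
next
  case (Suc L)
  have "iterV s (Suc L) v i = (\<Sum>l<n. a i l (s + L) *\<^sub>R (\<Sum>j<n. P s L l j *\<^sub>R v j))"
    by (simp, intro sum.cong refl, simp add: Suc.IH)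
  also have "\<dots> = (\<Sum>l<n. \<Sum>j<n. (a i l (s + L) * P s L l j) *\<^sub>R v j)"
    by (simp add: scaleR_sum_right)
  also have "\<dots> = (\<Sum>j<n. \<Sum>l<n. (a i l (s + L) * P s L l j) *\<^sub>R v j)"
    by (rule sum.swap)
  also have "\<dots> = (\<Sum>j<n. P s (Suc L) i j *\<^sub>R v j)"
    by (simp add: P_Suc scaleR_sum_left)
  finally show ?case .
qed

lemma iterV_nonneg:
  fixes v :: "nat \<Rightarrow> real"
  assumes "\<And>l. l < n \<Longrightarrow> v l \<ge> 0" "i < n"
  shows "iterV s L v i \<ge> 0"
  using assms(2)
proof (induction L arbitrary: i)
  case 0 then show ?case using assms by simp
next
  case (Suc L) then show ?case by (simp, intro sum_nonneg mult_nonneg_nonneg a_nonneg) auto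
qed

lemma iterV_range:
  fixes v :: "nat \<Rightarrow> real"
  assumes "\<And>l. l < n \<Longrightarrow> lo \<le> v l \<and> v l \<le> hi" "i < n"
  shows "lo \<le> iterV s L v i \<and> iterV s L v i \<le> hi"
  using assms(2)
proof (induction L arbitrary: i)
  case 0 then show ?case using assms by simp
next
  case (Suc L)
  have lo: "(\<Sum>l<n. a i l (s + L) * lo) \<le> (\<Sum>l<n. a i l (s + L) * iterV s L v l)"
    by (intro sum_mono mult_left_mono) (auto simp: a_nonneg Suc.IH)
  have hi: "(\<Sum>l<n. a i l (s + L) * iterV s L v l) \<le> (\<Sum>l<n. a i l (s + L) * hi)"
    by (intro sum_mono mult_left_mono) (auto simp: a_nonneg Suc.IH)
  have "(\<Sum>l<n. a i l (s + L) * c) = c" for c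
    using row_stoch[OF Suc.prems] by (simp add: sum_distrib_right[symmetric])
  then show ?case using lo hi by simp
qed

lemma sum_iterV:
  fixes v :: "nat \<Rightarrow> 'v::real_vector"
  shows "(\<Sum>i<n. iterV s L v i) = (\<Sum>j<n. v j)"
proof (induction L)
  case 0 then show ?case by simp
next
  case (Suc L)
  have "(\<Sum>i<n. iterV s (Suc L) v i) = (\<Sum>i<n. \<Sum>l<n. a i l (s + L) *\<^sub>R iterV s L v l)"
    by simp
  also have "\<dots> = (\<Sum>l<n. \<Sum>i<n. a i l (s + L) *\<^sub>R iterV s L v l)"
    by (rule sum.swap)
  also have "\<dots> = (\<Sum>l<n. iterV s L v l)"
    by (intro sum.cong refl) (simp add: scaleR_sum_left[symmetric] col_stoch)
  finally show ?case using Suc.IH by simp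
qed

lemma P_col_sum: "j < n \<Longrightarrow> (\<Sum>i<n. P s L i j) = 1"
  unfolding P_def by (subst sum_iterV) simp

lemma P_row_sum: assumes "i < n" shows "(\<Sum>j<n. P s L i j) = 1"
proof -
  have "iterV s L (\<lambda>_. 1::real) i = 1" using iterV_range[of 1 "\<lambda>_. 1" 1 i s L] assms by simp
  then show ?thesis using iterV_P[OF assms, of s L "\<lambda>_. 1::real"] by simp
qed

lemma P_nonneg: "i < n \<Longrightarrow> P s L i j \<ge> 0"
  unfolding P_def by (rule iterV_nonneg) auto


lemma window_step:
  fixes v :: "nat \<Rightarrow> real"
  assumes v0: "\<And>l. l < n \<Longrightarrow> v l \<ge> 0" and vc: "\<And>l. l \<in> S \<Longrightarrow> v l \<ge> c"
    and c0: "c \<ge> 0" and S: "S \<subseteq> {..<n}"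
  shows "i \<in> S \<union> {i. \<exists>l\<in>S. \<exists>k. s \<le> k \<and> k < s + u \<and> (l, i) \<in> E k}
          \<Longrightarrow> iterV s u v i \<ge> \<gamma> ^ u * c"
proof (induction u arbitrary: i)
  case 0 then show ?case using vc by auto
next
  case (Suc u)
  have i_n: "i < n" using Suc.prems S E_sub by blast
  have nn: "\<And>l. l < n \<Longrightarrow> 0 \<le> a i l (s + u) * iterV s u v l"
    using iterV_nonneg[OF v0] a_nonneg by (simp add: mult_nonneg_nonneg)
  have key: "\<exists>l<n. \<gamma> * (\<gamma> ^ u * c) \<le> a i l (s + u) * iterV s u v l"
  proof (cases "i \<in> S \<union> {i. \<exists>l\<in>S. \<exists>k. s \<le> k \<and> k < s + u \<and> (l, i) \<in> E k}")
    case True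
    have "\<gamma> \<le> a i i (s + u)" using a_edge self_loop[OF i_n] by blast
    moreover have "\<gamma> ^ u * c \<le> iterV s u v i" using Suc.IH[OF True] .
    ultimately show ?thesis using i_n gamma_pos c0
      by (intro exI[of _ i]) (auto intro!: mult_mono)
  next
    case False
    then obtain l k where l: "l \<in> S" "s \<le> k" "k < s + Suc u" "(l, i) \<in> E k"
      using Suc.prems by blast
    with False have "k = s + u" by fastforce
    with l have "\<gamma> \<le> a i l (s + u)" using a_edge by blast
    moreover have "\<gamma> ^ u * c \<le> iterV s u v l" using Suc.IH l(1) by blast
    ultimately show ?thesis using l S gamma_pos c0
      by (intro exI[of _ l]) (auto intro!: mult_mono)
  qed
  then obtain l where l: "l < n" "\<gamma> * (\<gamma> ^ u * c) \<le> a i l (s + u) * iterV s u v l" by blast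
  have "a i l (s + u) * iterV s u v l \<le> (\<Sum>l<n. a i l (s + u) * iterV s u v l)"
    by (rule member_le_sum) (use l nn in auto)
  then show ?case using l by simp
qed

lemma grow:
  assumes S: "S \<subseteq> {..<n}" "S \<noteq> {}" "S \<noteq> {..<n}"
  shows "\<exists>i. i \<notin> S \<and> (\<exists>l\<in>S. \<exists>k. w * U \<le> k \<and> k < w * U + U \<and> (l, i) \<in> E k)"
proof -
  obtain l0 where l0: "l0 \<in> S" using S by blast
  obtain i0 where i0: "i0 < n" "i0 \<notin> S" using S by blast
  let ?G = "\<Union>k\<in>{w * U..<(w + 1) * U}. E k"
  have "(l0, i0) \<in> (?G \<inter> {..<n} \<times> {..<n})\<^sup>*"
    using conn[of w] l0 S i0 unfolding strongly_connected_def by blast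
  from rtrancl_leave[OF this l0 i0(2)] obtain p q where
    pq: "(p, q) \<in> ?G" "p \<in> S" "q \<notin> S" by blast
  have "\<exists>k. w * U \<le> k \<and> k < w * U + U \<and> (p, q) \<in> E k" using pq(1) by (auto simp: add.commute)
  then show ?thesis using pq by blast
qed

lemma reach:
  assumes j: "j < n"
  shows "\<exists>S \<subseteq> {..<n}. j \<in> S \<and> (r + 1 \<le> card S \<or> S = {..<n}) \<and>
           (\<forall>i\<in>S. P (w * U) (r * U) i j \<ge> \<gamma> ^ (r * U))"
proof (induction r)
  case 0
  show ?case using j by (intro exI[of _ "{j}"]) (auto simp: P_def)
next
  case (Suc r)
  then obtain S where S: "S \<subseteq> {..<n}" "j \<in> S" "r + 1 \<le> card S \<or> S = {..<n}"
    "\<forall>i\<in>S. P (w * U) (r * U) i j \<ge> \<gamma> ^ (r * U)" by blast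
  define v where "v = iterV (w * U) (r * U) (\<lambda>l. if l = j then (1::real) else 0)"
  define s where "s = (w + r) * U"
  define S' where "S' = S \<union> {i. \<exists>l\<in>S. \<exists>k. s \<le> k \<and> k < s + U \<and> (l, i) \<in> E k}"
  have S'sub: "S' \<subseteq> {..<n}" using S(1) E_sub unfolding S'_def by blast
  have v0: "\<And>l. l < n \<Longrightarrow> v l \<ge> 0" unfolding v_def by (rule iterV_nonneg) auto
  have vc: "\<And>l. l \<in> S \<Longrightarrow> v l \<ge> \<gamma> ^ (r * U)" using S(4) unfolding v_def P_def by blast
  have val: "P (w * U) (Suc r * U) i j \<ge> \<gamma> ^ (Suc r * U)" if "i \<in> S'" for i
  proof -
    have e1: "Suc r * U = r * U + U" by simp
    have e2: "s = w * U + r * U" by (simp add: s_def distrib_right)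
    have "P (w * U) (Suc r * U) i j = iterV s U v i"
      by (simp only: P_def v_def e1 e2 iterV_add)
    moreover have "iterV s U v i \<ge> \<gamma> ^ U * \<gamma> ^ (r * U)"
      by (rule window_step[OF v0 vc _ S(1)]) (use that gamma_pos in \<open>auto simp: S'_def\<close>)
    ultimately show ?thesis by (simp add: power_add)
  qed
  have card: "Suc r + 1 \<le> card S' \<or> S' = {..<n}"
  proof (cases "S = {..<n}")
    case True then show ?thesis using S'sub unfolding S'_def by blast
  next
    case False
    obtain i where i: "i \<notin> S" "\<exists>l\<in>S. \<exists>k. (w + r) * U \<le> k \<and> k < (w + r) * U + U \<and> (l, i) \<in> E k"
      using grow[OF S(1) _ False, of "w + r"] S(2) by blast
    have "insert i S \<subseteq> S'" using i unfolding S'_def s_def by blast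
    then have "card (insert i S) \<le> card S'"
      using S'sub by (intro card_mono) (auto intro: finite_subset)
    moreover have "card (insert i S) = card S + 1"
      using i(1) S(1) by (simp add: finite_subset)
    ultimately show ?thesis using S(3) False by auto
  qed
  have "j \<in> S'" unfolding S'_def using S(2) by blast
  then show ?case using S'sub card val by blast
qed

definition B0 where "B0 = (n - 1) * U"
definition \<delta> where "\<delta> = \<gamma> ^ B0"

lemma B0_ge: "B0 \<ge> U" "B0 > 0"
  using n2 U_pos unfolding B0_def by auto

lemma P_block_pos:
  assumes "i < n" "j < n"
  shows "P (w * U) B0 i j \<ge> \<delta>"
proof -
  obtain S where S: "S \<subseteq> {..<n}" "(n - 1) + 1 \<le> card S \<or> S = {..<n}"
    "\<forall>i\<in>S. P (w * U) ((n - 1) * U) i j \<ge> \<gamma> ^ ((n - 1) * U)"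
    using reach[OF assms(2), of "n - 1" w] by blast
  have "S = {..<n}"
  proof (cases "S = {..<n}")
    case False
    then have "n \<le> card S" using S(2) n2 by auto
    moreover have "card S \<le> n" using S(1) card_mono[of "{..<n}" S] by simp
    ultimately show ?thesis using S(1) by (intro card_subset_eq) auto
  qed
  then show ?thesis using S(3) assms unfolding B0_def \<delta>_def by auto
qed


lemma gamma_half: "\<gamma> \<le> 1 / 2"
proof -
  let ?G = "\<Union>k\<in>{0 * U..<(0 + 1) * U}. E k"
  have "(0, 1) \<in> (?G \<inter> {..<n} \<times> {..<n})\<^sup>*"
    using conn[of 0] n2 unfolding strongly_connected_def by auto
  from rtrancl_leave[OF this, of "{0}"] obtain p q where pq: "(p, q) \<in> ?G \<inter> {..<n} \<times> {..<n}" "p = 0" "q \<noteq> 0"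
    by auto
  then obtain k where k: "(0, q) \<in> E k" "q < n" by auto
  have "a q 0 k + a q q k = (\<Sum>l\<in>{0, q}. a q l k)" using pq(3) by simp
  also have "\<dots> \<le> (\<Sum>l<n. a q l k)"
    using k(2) n2 by (intro sum_mono2) (auto simp: a_nonneg)
  also have "\<dots> = 1" using row_stoch[OF k(2)] .
  finally have "a q 0 k + a q q k \<le> 1" .
  moreover have "\<gamma> \<le> a q q k" using a_edge self_loop k(2) by blast
  moreover have "\<gamma> \<le> a q 0 k" using a_edge k(1) by blast
  ultimately show ?thesis by linarith
qed

lemma delta_facts: "0 < \<delta>" "\<delta> \<le> 1 / 2" "\<delta> * B0 \<le> 1"
proof -
  show "0 < \<delta>" unfolding \<delta>_def using gamma_pos by simp
  have "\<gamma> ^ B0 \<le> \<gamma> ^ 1" using B0_ge gamma_half gamma_pos by (intro power_decreasing) auto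
  then show "\<delta> \<le> 1 / 2" unfolding \<delta>_def using gamma_half by simp
  have "\<gamma> ^ B0 \<le> (1 / 2) ^ B0" using gamma_half gamma_pos by (intro power_mono) auto
  moreover have "real B0 < 2 ^ B0"
    using less_exp[of B0] by (metis of_nat_less_iff of_nat_numeral of_nat_power)
  ultimately have "\<gamma> ^ B0 * B0 \<le> (1 / 2) ^ B0 * 2 ^ B0"
    by (intro mult_mono) auto
  then show "\<delta> * B0 \<le> 1" unfolding \<delta>_def by (simp add: power_one_over)
qed

definition lm where "lm = (1 - \<delta>) powr (1 / real B0)"

lemma lm_facts: "0 < lm" "lm ^ B0 = 1 - \<delta>" "lm < 1" "\<delta> \<le> B0 * (1 - lm)"
proof -
  show p: "0 < lm" unfolding lm_def using delta_facts by simp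
  show e: "lm ^ B0 = 1 - \<delta>" unfolding lm_def using delta_facts B0_ge
    by (subst powr_power) auto
  show "lm < 1"
  proof (rule ccontr)
    assume "\<not> lm < 1"
    then have "1 \<le> lm ^ B0" by (intro one_le_power) simp
    then show False using e delta_facts by simp
  qed
  have "1 + real B0 * (lm - 1) \<le> (1 + (lm - 1)) ^ B0"
    by (rule Bernoulli_inequality) (use p in simp)
  then show "\<delta> \<le> B0 * (1 - lm)" using e by (simp add: algebra_simps)
qed

lemma blocks:
  fixes v :: "nat \<Rightarrow> real"
  assumes v: "\<And>l. l < n \<Longrightarrow> lo \<le> v l \<and> v l \<le> lo + W" and W0: "W \<ge> 0"
  shows "\<exists>lo'. \<forall>i<n. lo' \<le> iterV (w * U) (q * B0) v i \<and> iterV (w * U) (q * B0) v i \<le> lo' + (1 - \<delta>) ^ q * W"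
proof (induction q)
  case 0 then show ?case using v by (intro exI[of _ lo]) auto
next
  case (Suc q)
  then obtain lo' where lo': "\<forall>i<n. lo' \<le> iterV (w * U) (q * B0) v i \<and> iterV (w * U) (q * B0) v i \<le> lo' + (1 - \<delta>) ^ q * W"
    by blast
  define u where "u = iterV (w * U) (q * B0) v"
  define w' where "w' = w + q * (n - 1)"
  have e1: "Suc q * B0 = q * B0 + B0" by simp
  have e2: "w * U + q * B0 = w' * U" by (simp add: w'_def B0_def algebra_simps)
  have it: "iterV (w * U) (Suc q * B0) v i = (\<Sum>j<n. P (w' * U) B0 i j * u j)" if "i < n" for i
    using iterV_P[OF that, of "w' * U" B0 u] by (simp only: e1 iterV_add e2 u_def) simp
  have d1: "\<delta> \<le> 1" using delta_facts by simp
  have W': "0 \<le> (1 - \<delta>) ^ q * W" using d1 W0 by simp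
  have "\<forall>i<n. lo' + \<delta> * (\<Sum>j<n. u j - lo') \<le> (\<Sum>j<n. P (w' * U) B0 i j * u j)
              \<and> (\<Sum>j<n. P (w' * U) B0 i j * u j) \<le> lo' + \<delta> * (\<Sum>j<n. u j - lo') + (1 - \<delta>) * ((1 - \<delta>) ^ q * W)"
    by (rule contract) (use n2 P_block_pos delta_facts P_row_sum lo' W' in \<open>auto simp: u_def\<close>)
  then show ?case using it by (intro exI[of _ "lo' + \<delta> * (\<Sum>j<n. u j - lo')"]) (auto simp: mult.assoc)
qed

lemma P_dev:
  assumes j: "j < n"
  shows "\<exists>q. L \<le> (q + 2) * B0 \<and> (\<exists>lo. \<forall>i<n. lo \<le> P s L i j \<and> P s L i j \<le> lo + (1 - \<delta>) ^ q)"
proof -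
  define e where "e = (\<lambda>l. if l = j then (1::real) else 0)"
  define w where "w = (s + U - 1) div U"
  define s0 where "s0 = w * U"
  have "s + U - 1 = w * U + (s + U - 1) mod U" unfolding w_def by simp
  moreover have "(s + U - 1) mod U < U" using U_pos by simp
  ultimately have s0: "s \<le> s0" "s0 \<le> s + U - 1" unfolding s0_def by linarith+
  have e01: "\<And>l. l < n \<Longrightarrow> 0 \<le> e l \<and> e l \<le> 0 + 1" unfolding e_def by auto
  show ?thesis
  proof (cases "L \<le> s0 - s")
    case True
    have "L \<le> 2 * B0" using True s0 B0_ge(1) by linarith
    then have "L \<le> (0 + 2) * B0" by simp
    moreover have "\<forall>i<n. 0 \<le> P s L i j \<and> P s L i j \<le> 0 + (1 - \<delta>) ^ 0"
      unfolding P_def using iterV_range[of 0 e 1] e01 by (simp add: e_def)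
    ultimately show ?thesis by blast
  next
    case False
    define L' where "L' = L - (s0 - s)"
    define q where "q = L' div B0"
    define r where "r = L' mod B0"
    have "L' = q * B0 + r" unfolding q_def r_def by (rule div_mult_mod_eq[symmetric])
    then have L: "L = (s0 - s) + (q * B0 + r)" using False L'_def by linarith
    have r: "r < B0" unfolding r_def using B0_ge by simp
    define u1 where "u1 = iterV s (s0 - s) e"
    have u1: "\<And>l. l < n \<Longrightarrow> 0 \<le> u1 l \<and> u1 l \<le> 0 + 1"
      unfolding u1_def using iterV_range[of 0 e 1] e01 by simp
    obtain lo where lo: "\<forall>i<n. lo \<le> iterV (w * U) (q * B0) u1 i \<and> iterV (w * U) (q * B0) u1 i \<le> lo + (1 - \<delta>) ^ q * 1"
      using blocks[where v=u1 and lo=0 and W=1 and w=w and q=q] u1 by auto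
    have eqP: "P s L i j = iterV (s0 + q * B0) r (iterV s0 (q * B0) u1) i" for i
    proof -
      have "s + (s0 - s) = s0" using s0 by simp
      then show ?thesis unfolding P_def L u1_def e_def[symmetric] by (simp only: iterV_add)
    qed
    have "\<forall>i<n. lo \<le> P s L i j \<and> P s L i j \<le> lo + (1 - \<delta>) ^ q"
      unfolding eqP s0_def
    proof (intro allI impI)
      fix i assume "i < n"
      show "lo \<le> iterV (w * U + q * B0) r (iterV (w * U) (q * B0) u1) i \<and>
            iterV (w * U + q * B0) r (iterV (w * U) (q * B0) u1) i \<le> lo + (1 - \<delta>) ^ q"
        by (rule iterV_range) (use lo \<open>i < n\<close> in auto)
    qed
    moreover have "L \<le> (q + 2) * B0" using L r s0 B0_ge by (simp add: algebra_simps)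
    ultimately show ?thesis by blast
  qed
qed

lemma P_bound:
  assumes i: "i < n" and j: "j < n"
  shows "\<bar>P s L i j - 1 / n\<bar> \<le> lm ^ L / (1 - \<delta>)\<^sup>2"
proof -
  obtain q lo where q: "L \<le> (q + 2) * B0" and lo: "\<forall>i<n. lo \<le> P s L i j \<and> P s L i j \<le> lo + (1 - \<delta>) ^ q"
    using P_dev[OF j, of L s] by blast
  have "(\<Sum>i<n. lo) \<le> (\<Sum>i<n. P s L i j)" by (intro sum_mono) (use lo in auto)
  then have l1: "n * lo \<le> 1" using P_col_sum[OF j] by simp
  have "(\<Sum>i<n. P s L i j) \<le> (\<Sum>i<n. lo + (1 - \<delta>) ^ q)" by (intro sum_mono) (use lo in auto)
  then have l2: "1 \<le> n * (lo + (1 - \<delta>) ^ q)" using P_col_sum[OF j] by simp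
  have npos: "real n > 0" using n2 by simp
  have "lo \<le> 1 / n" using l1 npos by (simp add: field_simps)
  moreover have "1 / n \<le> lo + (1 - \<delta>) ^ q" using l2 npos by (simp add: field_simps)
  ultimately have A: "\<bar>P s L i j - 1 / n\<bar> \<le> (1 - \<delta>) ^ q" using lo i by auto
  have lmf: "0 < lm" "lm \<le> 1" using lm_facts by auto
  have "(1 - \<delta>) ^ q * (1 - \<delta>)\<^sup>2 = (lm ^ B0) ^ q * (lm ^ B0)\<^sup>2"
    by (simp add: lm_facts(2))
  also have "\<dots> = lm ^ ((q + 2) * B0)"
  proof -
    have ex: "(q + 2) * B0 = B0 * q + B0 * 2" by (simp add: algebra_simps)
    show ?thesis unfolding ex by (simp add: power_mult[symmetric] power_add)
  qed
  also have "\<dots> \<le> lm ^ L" using q lmf by (intro power_decreasing) auto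
  finally have "(1 - \<delta>) ^ q \<le> lm ^ L / (1 - \<delta>)\<^sup>2"
    using delta_facts by (simp add: field_simps)
  then show ?thesis using A by linarith
qed


lemma expand:
  fixes X e :: "nat \<Rightarrow> nat \<Rightarrow> 'v::real_vector"
  assumes rec: "\<And>i t. i < n \<Longrightarrow> X i (Suc t) = (\<Sum>l<n. a i l t *\<^sub>R X l t) + e i t"
  shows "i < n \<Longrightarrow> X i t = iterV 0 t (\<lambda>j. X j 0) i + (\<Sum>s<t. iterV (Suc s) (t - Suc s) (\<lambda>j. e j s) i)"
proof (induction t arbitrary: i)
  case 0 then show ?case by simp
next
  case (Suc t)
  have "X i (Suc t) = (\<Sum>l<n. a i l t *\<^sub>R (iterV 0 t (\<lambda>j. X j 0) l + (\<Sum>s<t. iterV (Suc s) (t - Suc s) (\<lambda>j. e j s) l))) + e i t"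
    using rec[OF Suc.prems] Suc.IH by simp
  also have "\<dots> = (\<Sum>l<n. a i l t *\<^sub>R iterV 0 t (\<lambda>j. X j 0) l)
       + (\<Sum>l<n. \<Sum>s<t. a i l t *\<^sub>R iterV (Suc s) (t - Suc s) (\<lambda>j. e j s) l) + e i t"
    by (simp add: scaleR_add_right sum.distrib scaleR_sum_right)
  also have "(\<Sum>l<n. \<Sum>s<t. a i l t *\<^sub>R iterV (Suc s) (t - Suc s) (\<lambda>j. e j s) l)
      = (\<Sum>s<t. \<Sum>l<n. a i l t *\<^sub>R iterV (Suc s) (t - Suc s) (\<lambda>j. e j s) l)"
    by (rule sum.swap)
  also have "\<dots> = (\<Sum>s<t. iterV (Suc s) (Suc t - Suc s) (\<lambda>j. e j s) i)"
  proof (intro sum.cong refl)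
    fix s assume "s \<in> {..<t}"
    then have e1: "Suc t - Suc s = Suc (t - Suc s)" and e2: "Suc (s + (t - Suc s)) = t" by auto
    show "(\<Sum>l<n. a i l t *\<^sub>R iterV (Suc s) (t - Suc s) (\<lambda>j. e j s) l) = iterV (Suc s) (Suc t - Suc s) (\<lambda>j. e j s) i"
      unfolding e1 by (simp add: e2)
  qed
  finally show ?case by (simp add: add.assoc)
qed

lemma dev_iterV:
  fixes v :: "nat \<Rightarrow> 'v::real_normed_vector"
  assumes i: "i < n" and vB: "\<And>j. j < n \<Longrightarrow> norm (v j) \<le> B"
  shows "norm (iterV s L v i - (1 / n) *\<^sub>R (\<Sum>j<n. v j)) \<le> n * (lm ^ L / (1 - \<delta>)\<^sup>2) * B"
proof -
  have "iterV s L v i - (1 / n) *\<^sub>R (\<Sum>j<n. v j) = (\<Sum>j<n. (P s L i j - 1 / n) *\<^sub>R v j)"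
    by (simp add: iterV_P[OF i] scaleR_diff_left sum_subtractf scaleR_sum_right)
  also have "norm \<dots> \<le> (\<Sum>j<n. \<bar>P s L i j - 1 / n\<bar> * norm (v j))"
    by (rule order_trans[OF norm_sum]) simp
  also have "\<dots> \<le> (\<Sum>j<n. (lm ^ L / (1 - \<delta>)\<^sup>2) * B)"
    using lm_facts(1) by (intro sum_mono mult_mono P_bound[OF i]) (auto simp: vB)
  finally show ?thesis by simp
qed

lemma deviation:
  fixes X e :: "nat \<Rightarrow> nat \<Rightarrow> 'v::real_normed_vector"
  assumes rec: "\<And>i t. i < n \<Longrightarrow> X i (Suc t) = (\<Sum>l<n. a i l t *\<^sub>R X l t) + e i t"
    and XB: "\<And>j. j < n \<Longrightarrow> norm (X j 0) \<le> B"
    and eB: "\<And>j s. j < n \<Longrightarrow> norm (e j s) \<le> Es s"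
    and i: "i < n"
  shows "norm (X i t - (1 / n) *\<^sub>R (\<Sum>k<n. X k t))
           \<le> n * (lm ^ t / (1 - \<delta>)\<^sup>2) * B + (\<Sum>s<t. n * (lm ^ (t - Suc s) / (1 - \<delta>)\<^sup>2) * Es s)"
proof -
  have sumX: "(\<Sum>k<n. X k t) = (\<Sum>j<n. X j 0) + (\<Sum>s<t. \<Sum>j<n. e j s)"
  proof -
    have "(\<Sum>k<n. X k t) = (\<Sum>k<n. iterV 0 t (\<lambda>j. X j 0) k + (\<Sum>s<t. iterV (Suc s) (t - Suc s) (\<lambda>j. e j s) k))"
      by (intro sum.cong refl) (simp add: expand[OF rec, of _ t])
    also have "\<dots> = (\<Sum>j<n. X j 0) + (\<Sum>k<n. \<Sum>s<t. iterV (Suc s) (t - Suc s) (\<lambda>j. e j s) k)"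
      by (simp add: sum.distrib sum_iterV)
    also have "\<dots> = (\<Sum>j<n. X j 0) + (\<Sum>s<t. \<Sum>k<n. iterV (Suc s) (t - Suc s) (\<lambda>j. e j s) k)"
      by (rule arg_cong[where f="\<lambda>z. (\<Sum>j<n. X j 0) + z"], rule sum.swap)
    also have "\<dots> = (\<Sum>j<n. X j 0) + (\<Sum>s<t. \<Sum>j<n. e j s)"
      by (simp add: sum_iterV)
    finally show ?thesis .
  qed
  have eqX: "X i t - (1 / n) *\<^sub>R (\<Sum>k<n. X k t)
      = (iterV 0 t (\<lambda>j. X j 0) i - (1 / n) *\<^sub>R (\<Sum>j<n. X j 0))
        + (\<Sum>s<t. iterV (Suc s) (t - Suc s) (\<lambda>j. e j s) i - (1 / n) *\<^sub>R (\<Sum>j<n. e j s))"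
  proof -
    define A where "A = iterV 0 t (\<lambda>j. X j 0) i"
    define F where "F = (\<lambda>s. iterV (Suc s) (t - Suc s) (\<lambda>j. e j s) i)"
    define G where "G = (\<lambda>s. \<Sum>j<n. e j s)"
    define X0 where "X0 = (\<Sum>j<n. X j 0)"
    have 1: "X i t = A + (\<Sum>s<t. F s)" unfolding A_def F_def by (rule expand[OF rec i])
    have 2: "(\<Sum>k<n. X k t) = X0 + (\<Sum>s<t. G s)" unfolding X0_def G_def by (rule sumX)
    have 3: "(\<Sum>s<t. F s - (1 / n) *\<^sub>R G s) = (\<Sum>s<t. F s) - (1 / n) *\<^sub>R (\<Sum>s<t. G s)"
      by (simp only: sum_subtractf scaleR_sum_right)
    have "X i t - (1 / n) *\<^sub>R (\<Sum>k<n. X k t) = (A - (1 / n) *\<^sub>R X0) + (\<Sum>s<t. F s - (1 / n) *\<^sub>R G s)"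
      unfolding 1 2 3 by (simp add: algebra_simps)
    then show ?thesis unfolding A_def F_def G_def X0_def .
  qed
  have "norm (X i t - (1 / n) *\<^sub>R (\<Sum>k<n. X k t)) \<le> norm (iterV 0 t (\<lambda>j. X j 0) i - (1 / n) *\<^sub>R (\<Sum>j<n. X j 0))
        + (\<Sum>s<t. norm (iterV (Suc s) (t - Suc s) (\<lambda>j. e j s) i - (1 / n) *\<^sub>R (\<Sum>j<n. e j s)))"
    unfolding eqX by (rule order_trans[OF norm_triangle_ineq add_left_mono[OF norm_sum]])
  also have "\<dots> \<le> n * (lm ^ t / (1 - \<delta>)\<^sup>2) * B + (\<Sum>s<t. n * (lm ^ (t - Suc s) / (1 - \<delta>)\<^sup>2) * Es s)"
  proof (rule add_mono)
    show "norm (iterV 0 t (\<lambda>j. X j 0) i - (1 / n) *\<^sub>R (\<Sum>j<n. X j 0)) \<le> n * (lm ^ t / (1 - \<delta>)\<^sup>2) * B"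
      by (rule dev_iterV[OF i]) (rule XB)
    show "(\<Sum>s<t. norm (iterV (Suc s) (t - Suc s) (\<lambda>j. e j s) i - (1 / n) *\<^sub>R (\<Sum>j<n. e j s)))
          \<le> (\<Sum>s<t. n * (lm ^ (t - Suc s) / (1 - \<delta>)\<^sup>2) * Es s)"
      by (rule sum_mono, rule dev_iterV[OF i]) (rule eB)
  qed
  finally show ?thesis .
qed

end


lemma sc_line_convex:
  fixes \<phi> :: "'a::real_inner \<Rightarrow> real"
  assumes sc: "strongly_convex \<mu> \<phi>"
  shows "convex_on UNIV (\<lambda>u. \<phi> (z + u *\<^sub>R (x - z)) - \<mu> / 2 * u\<^sup>2 * (norm (x - z))\<^sup>2)"
  unfolding convex_on_def
proof (intro conjI ballI allI impI)
  show "convex (UNIV :: real set)" by simp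
  fix p q u v :: real
  assume uv: "0 \<le> u" "0 \<le> v" "u + v = 1"
  define r where "r = norm (x - z)"
  define pa where "pa = z + p *\<^sub>R (x - z)"
  define pb where "pb = z + q *\<^sub>R (x - z)"
  have v: "v = 1 - u" using uv by simp
  have arg: "z + (u *\<^sub>R p + v *\<^sub>R q) *\<^sub>R (x - z) = u *\<^sub>R pa + (1 - u) *\<^sub>R pb"
    by (simp add: v pa_def pb_def algebra_simps)
  have nrm: "(norm (pa - pb))\<^sup>2 = (p - q)\<^sup>2 * r\<^sup>2"
  proof -
    have "pa - pb = (p - q) *\<^sub>R (x - z)" by (simp add: pa_def pb_def algebra_simps)
    then show ?thesis by (simp add: r_def power_mult_distrib)
  qed
  have scI: "\<phi> (u *\<^sub>R pa + (1 - u) *\<^sub>R pb) \<le> u * \<phi> pa + (1 - u) * \<phi> pb - \<mu> / 2 * u * (1 - u) * ((p - q)\<^sup>2 * r\<^sup>2)"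
    using sc[unfolded strongly_convex_def, rule_format, of u pa pb] uv nrm by simp
  define Sq where "Sq = (u *\<^sub>R p + v *\<^sub>R q)\<^sup>2"
  have Sq: "Sq = u * p\<^sup>2 + (1 - u) * q\<^sup>2 - u * (1 - u) * (p - q)\<^sup>2"
    by (simp add: Sq_def v power2_eq_square algebra_simps)
  have id: "u * (\<phi> pa - \<mu> / 2 * p\<^sup>2 * r\<^sup>2) + (1 - u) * (\<phi> pb - \<mu> / 2 * q\<^sup>2 * r\<^sup>2) + \<mu> / 2 * Sq * r\<^sup>2
      = u * \<phi> pa + (1 - u) * \<phi> pb - \<mu> / 2 * u * (1 - u) * ((p - q)\<^sup>2 * r\<^sup>2)"
    unfolding Sq by (simp add: power2_eq_square field_simps)
  have "\<phi> (z + (u *\<^sub>R p + v *\<^sub>R q) *\<^sub>R (x - z)) - \<mu> / 2 * Sq * r\<^sup>2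
      \<le> u * (\<phi> pa - \<mu> / 2 * p\<^sup>2 * r\<^sup>2) + (1 - u) * (\<phi> pb - \<mu> / 2 * q\<^sup>2 * r\<^sup>2)"
    unfolding arg using scI id by linarith
  then show "\<phi> (z + (u *\<^sub>R p + v *\<^sub>R q) *\<^sub>R (x - z)) - \<mu> / 2 * (u *\<^sub>R p + v *\<^sub>R q)\<^sup>2 * (norm (x - z))\<^sup>2
      \<le> u * (\<phi> (z + p *\<^sub>R (x - z)) - \<mu> / 2 * p\<^sup>2 * (norm (x - z))\<^sup>2) + v * (\<phi> (z + q *\<^sub>R (x - z)) - \<mu> / 2 * q\<^sup>2 * (norm (x - z))\<^sup>2)"
    unfolding Sq_def r_def pa_def pb_def v .
qed

lemma bregman_lower:
  fixes \<phi> :: "'a::real_inner \<Rightarrow> real"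
  assumes sc: "strongly_convex \<mu> \<phi>"
    and der: "\<And>u. (\<phi> has_derivative (\<lambda>w. inner (d\<phi> u) w)) (at u)"
  shows "bregman \<phi> d\<phi> x z \<ge> \<mu> / 2 * (norm (x - z))\<^sup>2"
proof -
  define g where "g = (\<lambda>u. \<phi> (z + u *\<^sub>R (x - z)) - \<mu> / 2 * u\<^sup>2 * (norm (x - z))\<^sup>2)"
  have cv: "convex_on UNIV g" unfolding g_def by (rule sc_line_convex[OF sc])
  have d1: "((\<lambda>u::real. \<phi> (z + u *\<^sub>R (x - z))) has_derivative (\<lambda>u. inner (d\<phi> z) (u *\<^sub>R (x - z)))) (at 0)"
  proof -
    have "((\<lambda>u::real. z + u *\<^sub>R (x - z)) has_derivative (\<lambda>u. u *\<^sub>R (x - z))) (at 0)"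
      by (auto intro!: derivative_eq_intros)
    moreover have "(\<phi> has_derivative (\<lambda>w. inner (d\<phi> z) w)) (at (z + (0::real) *\<^sub>R (x - z)))"
      using der[of z] by simp
    ultimately have "((\<phi> \<circ> (\<lambda>u::real. z + u *\<^sub>R (x - z))) has_derivative ((\<lambda>w. inner (d\<phi> z) w) \<circ> (\<lambda>u. u *\<^sub>R (x - z)))) (at 0)"
      by (rule diff_chain_at)
    then show ?thesis by (simp add: o_def)
  qed
  have d1': "((\<lambda>u::real. \<phi> (z + u *\<^sub>R (x - z))) has_field_derivative inner (d\<phi> z) (x - z)) (at 0)"
    unfolding has_field_derivative_def by (rule has_derivative_eq_rhs[OF d1]) (auto simp: fun_eq_iff mult.commute)
  have d2: "((\<lambda>u::real. \<mu> / 2 * u\<^sup>2 * (norm (x - z))\<^sup>2) has_field_derivative 0) (at 0)"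
    by (auto intro!: derivative_eq_intros)
  have dg: "(g has_field_derivative inner (d\<phi> z) (x - z)) (at 0 within UNIV)"
    unfolding g_def using DERIV_diff[OF d1' d2] by simp
  have "g 1 - g 0 \<ge> inner (d\<phi> z) (x - z) * (1 - 0)"
    by (rule convex_on_imp_above_tangent[OF cv _ _ _ dg]) auto
  then show ?thesis unfolding g_def bregman_def by simp
qed

lemma le_by_eps:
  fixes A B c :: real
  assumes c: "c \<ge> 0" and h: "\<And>u. 0 < u \<Longrightarrow> u \<le> 1 \<Longrightarrow> A \<le> B + u * c"
  shows "A \<le> B"
proof (rule field_le_epsilon)
  fix e :: real assume e: "0 < e"
  define u where "u = min 1 (e / (c + 1))"
  have u: "0 < u" "u \<le> 1" using e c by (auto simp: u_def)
  have "u * c \<le> e / (c + 1) * c" using c by (intro mult_right_mono) (auto simp: u_def)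
  also have "\<dots> \<le> e" using e c by (simp add: field_simps)
  finally show "A \<le> B + e" using h[OF u] by linarith
qed

lemma bregman_opt:
  fixes \<phi> :: "'a::real_inner \<Rightarrow> real"
  assumes sc: "strongly_convex \<mu> \<phi>" and mu: "\<mu> > 0"
    and der: "\<And>u. (\<phi> has_derivative (\<lambda>w. inner (d\<phi> u) w)) (at u)"
    and cvx: "convex \<Omega>" and z: "z \<in> \<Omega>" and xp: "xp \<in> \<Omega>"
    and opt: "\<forall>w\<in>\<Omega>. bregman \<phi> d\<phi> xp z + inner d xp \<le> bregman \<phi> d\<phi> w z + inner d w"
  shows "\<mu> * norm (xp - z) \<le> norm d"
proof -
  define F where "F = (\<lambda>w. bregman \<phi> d\<phi> w z + inner d w)"
  define r where "r = norm (z - xp)"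
  have step: "F xp \<le> F z - \<mu> / 2 * r\<^sup>2 + u * (\<mu> / 2 * r\<^sup>2)" if u: "0 < u" "u \<le> 1" for u
  proof -
    define wu where "wu = u *\<^sub>R z + (1 - u) *\<^sub>R xp"
    have "wu \<in> \<Omega>" unfolding wu_def using cvx z xp u by (intro convexD) auto
    then have 1: "F xp \<le> F wu" using opt unfolding F_def by blast
    have sc1: "\<phi> wu \<le> u * \<phi> z + (1 - u) * \<phi> xp - \<mu> / 2 * u * (1 - u) * r\<^sup>2"
      using sc[unfolded strongly_convex_def, rule_format, of u z xp] u unfolding wu_def r_def by simp
    have 2: "F wu = \<phi> wu - \<phi> z - (1 - u) * inner (d\<phi> z) (xp - z) + u * inner d z + (1 - u) * inner d xp"
      unfolding F_def bregman_def wu_def by (simp add: inner_diff_right inner_add_right algebra_simps)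
    have 3: "F xp = \<phi> xp - \<phi> z - inner (d\<phi> z) (xp - z) + inner d xp"
      unfolding F_def bregman_def by simp
    have 4: "F z = inner d z" unfolding F_def bregman_def by simp
    have 5: "F wu \<le> u * F z + (1 - u) * F xp - \<mu> / 2 * u * (1 - u) * r\<^sup>2"
      unfolding 2 3 4 using sc1 by (simp add: algebra_simps inner_diff_right)
    have 6: "(1 - u) * F xp = F xp - u * F xp" by (simp add: algebra_simps)
    from 1 5 6 have "u * F xp \<le> u * F z - \<mu> / 2 * u * (1 - u) * r\<^sup>2" by linarith
    moreover have "u * (F z - \<mu> / 2 * r\<^sup>2 + u * (\<mu> / 2 * r\<^sup>2)) = u * F z - \<mu> / 2 * u * (1 - u) * r\<^sup>2"
      by (simp add: field_simps power2_eq_square)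
    ultimately have "u * F xp \<le> u * (F z - \<mu> / 2 * r\<^sup>2 + u * (\<mu> / 2 * r\<^sup>2))" by linarith
    then show ?thesis using u by simp
  qed
  have A: "F xp \<le> F z - \<mu> / 2 * r\<^sup>2"
    by (rule le_by_eps[OF _ step]) (use mu in auto)
  have B: "bregman \<phi> d\<phi> xp z \<ge> \<mu> / 2 * r\<^sup>2"
    using bregman_lower[OF sc der, of xp z] unfolding r_def by (simp add: norm_minus_commute)
  have "F z = inner d z" unfolding F_def bregman_def by simp
  with A B have "\<mu> * r\<^sup>2 \<le> inner d (z - xp)" unfolding F_def by (simp add: inner_diff_right)
  also have "\<dots> \<le> norm d * r" unfolding r_def using Cauchy_Schwarz_ineq2[of d "z - xp"] by linarith
  finally have "\<mu> * r * r \<le> norm d * r" by (simp add: power2_eq_square mult.assoc)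
  then have "\<mu> * r \<le> norm d"
    using mu by (cases "r = 0") (auto simp: r_def)
  then show ?thesis by (simp add: r_def norm_minus_commute)
qed



lemma CS_w:
  fixes w b :: "nat \<Rightarrow> real"
  assumes w: "\<And>s. s \<in> A \<Longrightarrow> w s \<ge> 0"
  shows "(\<Sum>s\<in>A. w s * b s)\<^sup>2 \<le> (\<Sum>s\<in>A. w s) * (\<Sum>s\<in>A. w s * (b s)\<^sup>2)"
proof -
  have "(\<Sum>s\<in>A. sqrt (w s) * (sqrt (w s) * b s))\<^sup>2 \<le> (\<Sum>s\<in>A. (sqrt (w s))\<^sup>2) * (\<Sum>s\<in>A. (sqrt (w s) * b s)\<^sup>2)"
    by (rule Cauchy_Schwarz_ineq_sum)
  moreover have "(\<Sum>s\<in>A. sqrt (w s) * (sqrt (w s) * b s)) = (\<Sum>s\<in>A. w s * b s)"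
    by (intro sum.cong refl) (simp add: w mult.assoc[symmetric])
  moreover have "(\<Sum>s\<in>A. (sqrt (w s))\<^sup>2) = (\<Sum>s\<in>A. w s)"
    by (intro sum.cong refl) (simp add: w)
  moreover have "(\<Sum>s\<in>A. (sqrt (w s) * b s)\<^sup>2) = (\<Sum>s\<in>A. w s * (b s)\<^sup>2)"
    by (intro sum.cong refl) (simp add: w power_mult_distrib)
  ultimately show ?thesis by simp
qed

lemma geo1:
  fixes l :: real assumes "0 \<le> l" "l < 1"
  shows "(\<Sum>s<t. l ^ (t - Suc s)) \<le> 1 / (1 - l)"
proof -
  have "(\<Sum>s<t. l ^ (t - Suc s)) = (\<Sum>s<t. l ^ s)" by (rule sum.nat_diff_reindex)
  also have "\<dots> = (1 - l ^ t) / (1 - l)" using assms by (simp add: sum_gp_strict)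
  also have "\<dots> \<le> 1 / (1 - l)" using assms by (intro divide_right_mono) auto
  finally show ?thesis .
qed

lemma geo2:
  fixes l :: real assumes "0 \<le> l" "l < 1"
  shows "(\<Sum>s=0..t. l ^ (t - s)) \<le> 1 / (1 - l)"
proof -
  have "(\<Sum>s=0..t. l ^ (t - s)) = (\<Sum>s<Suc t. l ^ (Suc t - Suc s))"
    by (simp add: atLeast0AtMost lessThan_Suc_atMost)
  also have "\<dots> \<le> 1 / (1 - l)" by (rule geo1[OF assms])
  finally show ?thesis .
qed

lemma shift_sum:
  fixes l :: real assumes "0 < l"
  shows "(\<Sum>s<t. l ^ (t - Suc s) * f s) = (\<Sum>s<t. l ^ (t - s) * f s) / l"
proof -
  have "(\<Sum>s<t. l ^ (t - s) * f s) = (\<Sum>s<t. l * (l ^ (t - Suc s) * f s))"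
  proof (intro sum.cong refl)
    fix s assume "s \<in> {..<t}"
    then have "t - s = Suc (t - Suc s)" by auto
    then show "l ^ (t - s) * f s = l * (l ^ (t - Suc s) * f s)" by simp
  qed
  also have "\<dots> = l * (\<Sum>s<t. l ^ (t - Suc s) * f s)" by (simp add: sum_distrib_left)
  finally show ?thesis using assms by simp
qed

lemma sub_sum:
  fixes l :: real assumes "0 \<le> l" "\<And>s. f s \<ge> 0"
  shows "(\<Sum>s<t. l ^ (t - s) * f s) \<le> (\<Sum>s=0..t. l ^ (t - s) * f s)"
  by (rule sum_mono2) (use assms in auto)

lemma pos_err:
  fixes W G e :: real
  assumes W: "0 \<le> W" and e: "0 < e" "e \<le> 1"
  shows "\<bar>max ((1 - e) * W + e * G) 0 - W\<bar> \<le> e * (\<bar>W\<bar> + \<bar>G\<bar>)"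
proof (cases "(1 - e) * W + e * G \<ge> 0")
  case True
  have "(1 - e) * W + e * G - W = e * (G - W)" by (simp add: algebra_simps)
  then have "\<bar>(1 - e) * W + e * G - W\<bar> = e * \<bar>G - W\<bar>" using e by (simp add: abs_mult)
  also have "\<dots> \<le> e * (\<bar>W\<bar> + \<bar>G\<bar>)" using e by (intro mult_left_mono) auto
  finally show ?thesis using True by simp
next
  case False
  have "- \<bar>G\<bar> \<le> G" by simp
  then have "- (e * \<bar>G\<bar>) \<le> e * G" using e mult_left_mono[of "- \<bar>G\<bar>" G e] by simp
  then show ?thesis using False W e by (simp add: algebra_simps)
qed

lemma norm_abs_vec:
  fixes w :: "real ^ 'k"
  shows "norm (\<chi> k. \<bar>w $ k\<bar>) = norm w"
  by (rule antisym) (rule norm_le_componentwise_cart; simp)+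

lemma norm_pos_err:
  fixes w g :: "real ^ 'k"
  assumes w: "\<And>k. w $ k \<ge> 0" and e: "0 < e" "e \<le> 1"
  shows "norm (pospart ((1 - e) *\<^sub>R w + e *\<^sub>R g) - w) \<le> e * (norm w + norm g)"
proof -
  have "norm (pospart ((1 - e) *\<^sub>R w + e *\<^sub>R g) - w) \<le> norm (e *\<^sub>R ((\<chi> k. \<bar>w $ k\<bar>) + (\<chi> k. \<bar>g $ k\<bar>)))"
    by (rule norm_le_componentwise_cart) (use pos_err[OF w e] e in \<open>simp add: pospart_def abs_mult\<close>)
  also have "\<dots> \<le> e * (norm w + norm g)"
    using e norm_triangle_ineq[of "\<chi> k. \<bar>w $ k\<bar>" "\<chi> k. \<bar>g $ k\<bar>"] by (simp add: norm_abs_vec)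
  finally show ?thesis .
qed


theorem lemma5:
  fixes n U T :: nat
    and \<gamma> \<mu> \<kappa> \<kappa>1 \<kappa>2 \<kappa>3 :: real
    and E :: "nat \<Rightarrow> (nat \<times> nat) set"
    and a :: "nat \<Rightarrow> nat \<Rightarrow> nat \<Rightarrow> real"
    and \<Omega> :: "(real ^ 'm) set"
    and f :: "nat \<Rightarrow> nat \<Rightarrow> real ^ 'm \<Rightarrow> real ^ 'm \<Rightarrow> real"
    and df :: "nat \<Rightarrow> nat \<Rightarrow> real ^ 'm \<Rightarrow> real ^ 'm \<Rightarrow> real ^ 'm"
    and g :: "nat \<Rightarrow> nat \<Rightarrow> real ^ 'm \<Rightarrow> real ^ 'h"
    and dg :: "nat \<Rightarrow> nat \<Rightarrow> 'h \<Rightarrow> real ^ 'm \<Rightarrow> real ^ 'm"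
    and \<phi> :: "real ^ 'm \<Rightarrow> real"
    and d\<phi> :: "real ^ 'm \<Rightarrow> real ^ 'm"
    and \<zeta> \<eta> :: "nat \<Rightarrow> real"
    and x :: "nat \<Rightarrow> nat \<Rightarrow> real ^ 'm"
    and y :: "nat \<Rightarrow> nat \<Rightarrow> real ^ 'h"
  assumes n2: "n \<ge> 2"
    and gamma_pos: "\<gamma> > 0"
    and E_sub: "\<And>t. E t \<subseteq> {..<n} \<times> {..<n}"
    and a_edge: "\<And>t i j. (j, i) \<in> E t \<Longrightarrow> \<gamma> \<le> a i j t \<and> a i j t \<le> 1"
    and a_nonedge: "\<And>t i j. (j, i) \<notin> E t \<Longrightarrow> a i j t = 0"
    and self_loop: "\<And>t i. i < n \<Longrightarrow> (i, i) \<in> E t"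
    and U_pos: "U > 0"
    and conn: "\<And>t. strongly_connected {..<n} (\<Union>k\<in>{t * U..<(t + 1) * U}. E k)"
    and row_stoch: "\<And>t i. i < n \<Longrightarrow> (\<Sum>j<n. a i j t) = 1"
    and col_stoch: "\<And>t j. j < n \<Longrightarrow> (\<Sum>i<n. a i j t) = 1"
    and f_cvx: "\<And>i t u. i < n \<Longrightarrow> u \<in> \<Omega> \<Longrightarrow> convex_on \<Omega> (f i t u)"
    and f_grad: "\<And>i t u v. i < n \<Longrightarrow> u \<in> \<Omega> \<Longrightarrow> v \<in> \<Omega> \<Longrightarrow>
        (f i t u has_derivative (\<lambda>w. inner (df i t u v) w)) (at v within \<Omega>)"
    and g_cvx: "\<And>i t k. i < n \<Longrightarrow> convex_on \<Omega> (\<lambda>u. g i t u $ k)"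
    and g_grad: "\<And>i t k u. i < n \<Longrightarrow> u \<in> \<Omega> \<Longrightarrow>
        ((\<lambda>w. g i t w $ k) has_derivative (\<lambda>w. inner (dg i t k u) w)) (at u within \<Omega>)"
    and Omega_convex: "convex \<Omega>"
    and Omega_compact: "compact \<Omega>"
    and X_nonempty: "\<And>t. \<exists>u\<in>\<Omega>. \<forall>k. (\<Sum>i<n. g i t u $ k) \<le> 0"
    and kappa: "\<And>u. u \<in> \<Omega> \<Longrightarrow> norm u \<le> \<kappa>"
    and kappa1: "\<And>i t u v. i < n \<Longrightarrow> u \<in> \<Omega> \<Longrightarrow> v \<in> \<Omega> \<Longrightarrow> norm (df i t u v) \<le> \<kappa>1"
    and kappa2: "\<And>i t u. i < n \<Longrightarrow> u \<in> \<Omega> \<Longrightarrow> norm (g i t u) \<le> \<kappa>2"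
    and kappa3: "\<And>i t k u. i < n \<Longrightarrow> u \<in> \<Omega> \<Longrightarrow> norm (dg i t k u) \<le> \<kappa>3"
    and phi_diff: "\<And>u. (\<phi> has_derivative (\<lambda>w. inner (d\<phi> u) w)) (at u)"
    and mu_pos: "\<mu> > 0"
    and phi_sc: "strongly_convex \<mu> \<phi>"
    and zeta_range: "\<And>t. 0 < \<zeta> t \<and> \<zeta> t \<le> 1"
    and eta_range: "\<And>t. 0 < \<eta> t \<and> \<eta> t \<le> 1"
    and zeta_le_eta: "\<And>t. \<zeta> t \<le> \<eta> t"
    and zeta_noninc: "\<And>t. \<zeta> (Suc t) \<le> \<zeta> t"
    and eta_noninc: "\<And>t. \<eta> (Suc t) \<le> \<eta> t"
    and x0: "\<And>i. i < n \<Longrightarrow> x i 0 \<in> \<Omega>"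
    and y0: "\<And>i. i < n \<Longrightarrow> y i 0 = 0"
    and x_step: "\<And>i t. i < n \<Longrightarrow>
        x i (Suc t) \<in> \<Omega> \<and>
        (\<forall>w\<in>\<Omega>.
          bregman \<phi> d\<phi> (x i (Suc t)) (\<Sum>j\<in>{j. (j, i) \<in> E t}. a i j t *\<^sub>R x j t)
            + inner (\<zeta> t *\<^sub>R df i t (x i t) (x i t)
                     + \<eta> t *\<^sub>R (\<Sum>k\<in>UNIV. (y i t $ k) *\<^sub>R dg i t k (x i t))) (x i (Suc t))
          \<le> bregman \<phi> d\<phi> w (\<Sum>j\<in>{j. (j, i) \<in> E t}. a i j t *\<^sub>R x j t)
            + inner (\<zeta> t *\<^sub>R df i t (x i t) (x i t)
                     + \<eta> t *\<^sub>R (\<Sum>k\<in>UNIV. (y i t $ k) *\<^sub>R dg i t k (x i t))) w)"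
    and y_step: "\<And>i t. i < n \<Longrightarrow>
        y i (Suc t) = pospart ((1 - \<eta> t) *\<^sub>R (\<Sum>j\<in>{j. (j, i) \<in> E t}. a i j t *\<^sub>R y j t)
                                + \<eta> t *\<^sub>R g i t (x i t))"
  shows "let m = real CARD('m); h = real CARD('h); N = real n;
             lm = lam \<gamma> n U; C = Cconst \<gamma> n U;
             xbar = (\<lambda>t. (1 / N) *\<^sub>R (\<Sum>i<n. x i t));
             ybar = (\<lambda>t. (1 / N) *\<^sub>R (\<Sum>i<n. y i t));
             S1 = (\<lambda>t. \<Sum>s=0..t. lm ^ (t - s) * \<eta> s);
             S2 = (\<lambda>t. \<Sum>s=0..t. lm ^ (t - s) * (\<eta> s)\<^sup>2);
             \<rho>1 = sqrt m * N * \<kappa> * C;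
             \<rho>2 = (sqrt m * N powr (3/2) * h * \<kappa>2 * \<kappa>3 * C + sqrt m * N * \<kappa>1 * C) / (\<mu> * lm);
             \<rho>3 = m * N\<^sup>2 * \<kappa>\<^sup>2 * C\<^sup>2
                  + (2 * m * N powr (5/2) * h * \<kappa> * \<kappa>2 * \<kappa>3 * C\<^sup>2 + 2 * m * N\<^sup>2 * \<kappa> * \<kappa>1 * C\<^sup>2)
                    / (\<mu> * lm * (1 - lm));
             \<rho>4 = m * (N powr (3/2) * h * \<kappa>2 * \<kappa>3 * C + N * \<kappa>1 * C)\<^sup>2 / (\<mu>\<^sup>2 * lm\<^sup>2 * (1 - lm));
             \<rho>5 = (sqrt N * h * \<kappa>2 * \<kappa>3 + \<kappa>1) / \<mu>;
             \<rho>6 = (sqrt h * N powr (3/2) * C * \<kappa>2 + sqrt h * N * C * \<kappa>2) / lm;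
             \<rho>7 = h * (N powr (3/2) * C * \<kappa>2 + N * C * \<kappa>2)\<^sup>2 / lm\<^sup>2
         in \<forall>i<n. \<forall>t\<in>{1..T}.
              norm (x i t - xbar t) \<le> \<rho>1 * lm ^ t + \<rho>2 * S1 t
            \<and> (norm (x i t - xbar t))\<^sup>2 \<le> \<rho>3 * lm ^ t + \<rho>4 * S2 t
            \<and> norm (x i (Suc t) - x i t) \<le> 2 * \<rho>1 * lm ^ t + 2 * \<rho>2 * S1 t + \<rho>5 * \<eta> t
            \<and> norm (y i t - ybar t) \<le> \<rho>6 * S1 t
            \<and> (norm (y i t - ybar t))\<^sup>2 \<le> \<rho>7 * S2 t"
proof -
  interpret M: mix n U \<gamma> E a
    by (rule mix.intro) (fact n2 gamma_pos E_sub a_edge a_nonedge self_loop U_pos conn row_stoch col_stoch)+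
  define m where "m = real CARD('m)"
  define h where "h = real CARD('h)"
  define N where "N = real n"
  define lm where "lm = lam \<gamma> n U"
  define C where "C = Cconst \<gamma> n U"
  define xbar where "xbar = (\<lambda>t. (1 / N) *\<^sub>R (\<Sum>i<n. x i t))"
  define ybar where "ybar = (\<lambda>t. (1 / N) *\<^sub>R (\<Sum>i<n. y i t))"
  define S1 where "S1 = (\<lambda>t. \<Sum>s=0..t. lm ^ (t - s) * \<eta> s)"
  define S2 where "S2 = (\<lambda>t. \<Sum>s=0..t. lm ^ (t - s) * (\<eta> s)\<^sup>2)"
  define \<delta> where "\<delta> = M.\<delta>"
  define D where "D = 1 / (1 - \<delta>)\<^sup>2"
  define K where "K = \<kappa>1 + h * \<kappa>2 * \<kappa>3"
  have lm_eq: "lm = M.lm" unfolding lm_def lam_def M.lm_def M.\<delta>_def M.B0_def ..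
  have C_eq: "C = 2 / lm * (1 + 1 / \<delta>) / (1 - \<delta>)"
    unfolding C_def Cconst_def lm_def \<delta>_def M.\<delta>_def M.B0_def ..
  have lm01: "0 < lm" "lm < 1" using M.lm_facts lm_eq by auto
  have dl: "0 < \<delta>" "\<delta> \<le> 1 / 2" "\<delta> * M.B0 \<le> 1" "\<delta> \<le> M.B0 * (1 - lm)"
    using M.delta_facts M.lm_facts lm_eq unfolding \<delta>_def by auto
  have N1: "N \<ge> 1" unfolding N_def using n2 by simp
  have m1: "m \<ge> 1" unfolding m_def by simp
  have h1: "h \<ge> 1" unfolding h_def by simp
  have D_pos: "D > 0" unfolding D_def using dl by simp
  have D4: "D \<le> 4"
  proof -
    have "1 / 2 \<le> 1 - \<delta>" using dl by simp
    then have "(1 / 2)\<^sup>2 \<le> (1 - \<delta>)\<^sup>2" by (intro power_mono) auto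
    then show ?thesis unfolding D_def using dl by (simp add: field_simps)
  qed
  have C_ge: "C \<ge> 2 / (\<delta> * (1 - \<delta>))"
  proof -
    have "2 / (\<delta> * (1 - \<delta>)) = 2 * (1 / \<delta>) / (1 - \<delta>)" by simp
    also have "\<dots> \<le> 2 / lm * (1 + 1 / \<delta>) / (1 - \<delta>)"
    proof (intro divide_right_mono mult_mono)
      show "2 \<le> 2 / lm" using lm01 by (simp add: field_simps)
    qed (use dl lm01 in auto)
    finally show ?thesis unfolding C_eq .
  qed
  have "2 / (\<delta> * (1 - \<delta>)) > 0" using dl by simp
  then have C_pos: "C > 0" using C_ge by linarith
  have DC: "D \<le> C"
  proof -
    have a1: "1 / (1 - \<delta>) \<le> 2" using dl by (simp add: field_simps)
    have "D = 1 / (1 - \<delta>) * (1 / (1 - \<delta>))" unfolding D_def by (simp add: power2_eq_square)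
    also have "\<dots> \<le> 2 * (1 / (1 - \<delta>))" using a1 dl by (intro mult_right_mono) auto
    also have "\<dots> \<le> 2 / (\<delta> * (1 - \<delta>))"
    proof -
      have "\<delta> * (1 - \<delta>) \<le> 1 - \<delta>" using dl by (intro mult_left_le_one_le) auto
      then have "2 / (1 - \<delta>) \<le> 2 / (\<delta> * (1 - \<delta>))"
        using dl by (intro divide_left_mono) auto
      then show ?thesis by simp
    qed
    finally show ?thesis using C_ge by linarith
  qed
  obtain u0 where u0: "u0 \<in> \<Omega>" using X_nonempty by blast
  have k0: "\<kappa> \<ge> 0" using kappa[OF u0] norm_ge_zero[of u0] by linarith
  have "norm (df 0 0 u0 u0) \<le> \<kappa>1" by (rule kappa1) (use n2 u0 in auto)
  then have k10: "\<kappa>1 \<ge> 0" using norm_ge_zero[of "df 0 0 u0 u0"] by linarith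
  have "norm (g 0 0 u0) \<le> \<kappa>2" by (rule kappa2) (use n2 u0 in auto)
  then have k20: "\<kappa>2 \<ge> 0" using norm_ge_zero[of "g 0 0 u0"] by linarith
  have "norm (dg 0 0 undefined u0) \<le> \<kappa>3" by (rule kappa3) (use n2 u0 in auto)
  then have k30: "\<kappa>3 \<ge> 0" using norm_ge_zero[of "dg 0 0 undefined u0"] by linarith
  have K0: "K \<ge> 0" unfolding K_def using k10 k20 k30 h1 by simp
  have sumconv: "(\<Sum>j\<in>{j. (j, i) \<in> E t}. a i j t *\<^sub>R F j) = (\<Sum>j<n. a i j t *\<^sub>R F j)"
    for i t and F :: "nat \<Rightarrow> 'v::real_vector"
    by (rule sum.mono_neutral_left) (use E_sub a_nonedge in auto)
  have xin: "\<And>i. i < n \<Longrightarrow> x i t \<in> \<Omega>" for t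
    by (cases t) (use x0 x_step in auto)
  have zin: "(\<Sum>l<n. a i l t *\<^sub>R x l t) \<in> \<Omega>" if "i < n" for i t
    by (rule convex_sum) (use Omega_convex row_stoch[OF that] M.a_nonneg xin in auto)
  have ybd: "\<And>i. i < n \<Longrightarrow> norm (y i t) \<le> \<kappa>2 \<and> (\<forall>k. 0 \<le> y i t $ k)" for t
  proof (induction t)
    case 0 then show ?case using y0 k20 by simp
  next
    case (Suc t)
    define w where "w = (\<Sum>l<n. a i l t *\<^sub>R y l t)"
    have yS: "y i (Suc t) = pospart ((1 - \<eta> t) *\<^sub>R w + \<eta> t *\<^sub>R g i t (x i t))"
      using y_step[OF Suc.prems] unfolding w_def sumconv .
    have nw: "norm w \<le> \<kappa>2"
    proof -
      have "norm w \<le> (\<Sum>l<n. a i l t * norm (y l t))"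
        unfolding w_def by (rule order_trans[OF norm_sum]) (simp add: M.a_nonneg)
      also have "\<dots> \<le> (\<Sum>l<n. a i l t * \<kappa>2)"
        by (intro sum_mono mult_left_mono) (use Suc.IH M.a_nonneg in auto)
      also have "\<dots> = \<kappa>2" using row_stoch[OF Suc.prems] by (simp add: sum_distrib_right[symmetric])
      finally show ?thesis .
    qed
    have ng: "norm (g i t (x i t)) \<le> \<kappa>2" using kappa2 xin Suc.prems by blast
    have "norm (pospart ((1 - \<eta> t) *\<^sub>R w + \<eta> t *\<^sub>R g i t (x i t))) \<le> norm ((1 - \<eta> t) *\<^sub>R w + \<eta> t *\<^sub>R g i t (x i t))"
      by (rule norm_le_componentwise_cart) (simp add: pospart_def)
    also have "\<dots> \<le> (1 - \<eta> t) * norm w + \<eta> t * norm (g i t (x i t))"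
      using eta_range[of t] by (intro order_trans[OF norm_triangle_ineq]) simp
    also have "\<dots> \<le> (1 - \<eta> t) * \<kappa>2 + \<eta> t * \<kappa>2"
      using eta_range[of t] nw ng by (intro add_mono mult_left_mono) auto
    finally show ?case unfolding yS by (simp add: pospart_def algebra_simps)
  qed
  define ex where "ex = (\<lambda>i s. x i (Suc s) - (\<Sum>l<n. a i l s *\<^sub>R x l s))"
  define ey where "ey = (\<lambda>i s. y i (Suc s) - (\<Sum>l<n. a i l s *\<^sub>R y l s))"
  have exb: "norm (ex i s) \<le> \<eta> s * K / \<mu>" if i: "i < n" for i s
  proof -
    define z where "z = (\<Sum>l<n. a i l s *\<^sub>R x l s)"
    define d where "d = \<zeta> s *\<^sub>R df i s (x i s) (x i s) + \<eta> s *\<^sub>R (\<Sum>k\<in>UNIV. (y i s $ k) *\<^sub>R dg i s k (x i s))"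
    have xs: "x i (Suc s) \<in> \<Omega>"
      and opt: "\<forall>w\<in>\<Omega>. bregman \<phi> d\<phi> (x i (Suc s)) z + inner d (x i (Suc s)) \<le> bregman \<phi> d\<phi> w z + inner d w"
      using x_step[OF i, of s] unfolding z_def d_def sumconv by auto
    have "\<mu> * norm (x i (Suc s) - z) \<le> norm d"
      by (rule bregman_opt[OF phi_sc mu_pos phi_diff Omega_convex _ xs opt]) (use zin[OF i] in \<open>simp add: z_def\<close>)
    moreover have "norm d \<le> \<eta> s * K"
    proof -
      have "norm (\<Sum>k\<in>UNIV. (y i s $ k) *\<^sub>R dg i s k (x i s)) \<le> (\<Sum>k\<in>(UNIV::'h set). \<kappa>2 * \<kappa>3)"
      proof (rule order_trans[OF norm_sum], rule sum_mono)
        fix k :: 'h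
        have "\<bar>y i s $ k\<bar> \<le> \<kappa>2" using ybd[OF i, of s] component_le_norm_cart[of "y i s" k] by linarith
        moreover have "norm (dg i s k (x i s)) \<le> \<kappa>3" using kappa3[OF i xin[OF i]] .
        ultimately show "norm ((y i s $ k) *\<^sub>R dg i s k (x i s)) \<le> \<kappa>2 * \<kappa>3"
          using k20 by (simp add: mult_mono)
      qed
      also have "\<dots> = h * \<kappa>2 * \<kappa>3" by (simp add: h_def)
      finally have A: "norm (\<Sum>k\<in>UNIV. (y i s $ k) *\<^sub>R dg i s k (x i s)) \<le> h * \<kappa>2 * \<kappa>3" .
      have B: "norm (df i s (x i s) (x i s)) \<le> \<kappa>1" using kappa1 i xin by blast
      have "norm d \<le> \<zeta> s * norm (df i s (x i s) (x i s)) + \<eta> s * norm (\<Sum>k\<in>UNIV. (y i s $ k) *\<^sub>R dg i s k (x i s))"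
        unfolding d_def using zeta_range[of s] eta_range[of s] by (intro order_trans[OF norm_triangle_ineq]) simp
      also have "\<dots> \<le> \<eta> s * \<kappa>1 + \<eta> s * (h * \<kappa>2 * \<kappa>3)"
        using zeta_range[of s] eta_range[of s] zeta_le_eta[of s] A B k10
        by (intro add_mono mult_mono) auto
      finally show ?thesis unfolding K_def by (simp add: algebra_simps)
    qed
    ultimately have "\<mu> * norm (x i (Suc s) - z) \<le> \<eta> s * K" by linarith
    then show ?thesis unfolding ex_def z_def[symmetric] using mu_pos by (simp add: field_simps)
  qed
  have eyb: "norm (ey i s) \<le> 2 * \<kappa>2 * \<eta> s" if i: "i < n" for i s
  proof -
    define w where "w = (\<Sum>l<n. a i l s *\<^sub>R y l s)"
    have yS: "y i (Suc s) = pospart ((1 - \<eta> s) *\<^sub>R w + \<eta> s *\<^sub>R g i s (x i s))"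
      using y_step[OF i] unfolding w_def sumconv .
    have w0: "\<And>k. w $ k \<ge> 0" unfolding w_def
      using ybd M.a_nonneg by (simp, intro sum_nonneg mult_nonneg_nonneg) auto
    have nw: "norm w \<le> \<kappa>2"
    proof -
      have "norm w \<le> (\<Sum>l<n. a i l s * norm (y l s))"
        unfolding w_def by (rule order_trans[OF norm_sum]) (simp add: M.a_nonneg)
      also have "\<dots> \<le> (\<Sum>l<n. a i l s * \<kappa>2)"
        by (intro sum_mono mult_left_mono) (use ybd M.a_nonneg in auto)
      also have "\<dots> = \<kappa>2" using row_stoch[OF i] by (simp add: sum_distrib_right[symmetric])
      finally show ?thesis .
    qed
    have ng: "norm (g i s (x i s)) \<le> \<kappa>2" using kappa2 xin i by blast
    have "norm (ey i s) \<le> \<eta> s * (norm w + norm (g i s (x i s)))"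
      unfolding ey_def w_def[symmetric] yS by (rule norm_pos_err[OF w0]) (use eta_range in auto)
    also have "\<dots> \<le> \<eta> s * (2 * \<kappa>2)" using nw ng eta_range[of s] by (intro mult_left_mono) auto
    finally show ?thesis by (simp add: algebra_simps)
  qed
  have devx: "norm (x i t - xbar t) \<le> N * (lm ^ t / (1 - \<delta>)\<^sup>2) * \<kappa> + (\<Sum>s<t. N * (lm ^ (t - Suc s) / (1 - \<delta>)\<^sup>2) * (\<eta> s * K / \<mu>))"
    if i: "i < n" for i t
    unfolding xbar_def N_def lm_eq \<delta>_def
    by (rule M.deviation[where e = ex]) (use i exb kappa x0 in \<open>auto simp: ex_def\<close>)
  have devy: "norm (y i t - ybar t) \<le> N * (lm ^ t / (1 - \<delta>)\<^sup>2) * 0 + (\<Sum>s<t. N * (lm ^ (t - Suc s) / (1 - \<delta>)\<^sup>2) * (2 * \<kappa>2 * \<eta> s))"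
    if i: "i < n" for i t
    unfolding ybar_def N_def lm_eq \<delta>_def
    by (rule M.deviation[where e = ey]) (use i eyb y0 in \<open>auto simp: ey_def\<close>)
  define T1 where "T1 = (\<lambda>t. \<Sum>s<t. lm ^ (t - Suc s) * \<eta> s)"
  have eta0: "\<And>s. 0 \<le> \<eta> s" using eta_range less_imp_le by blast
  have S1nn: "S1 t \<ge> 0" for t unfolding S1_def using lm01 eta0 by (intro sum_nonneg mult_nonneg_nonneg) auto
  have S2nn: "S2 t \<ge> 0" for t unfolding S2_def using lm01 by (intro sum_nonneg mult_nonneg_nonneg) auto
  have T1nn: "T1 t \<ge> 0" for t unfolding T1_def using lm01 eta0 by (intro sum_nonneg mult_nonneg_nonneg) auto
  have T1S1: "T1 t \<le> S1 t / lm" for t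
  proof -
    have "T1 t = (\<Sum>s<t. lm ^ (t - s) * \<eta> s) / lm" unfolding T1_def by (rule shift_sum[OF lm01(1)])
    also have "\<dots> \<le> S1 t / lm" unfolding S1_def using lm01 eta0
      by (intro divide_right_mono sub_sum) auto
    finally show ?thesis .
  qed
  have T1sq: "(T1 t)\<^sup>2 \<le> S2 t / (lm * (1 - lm))" for t
  proof -
    have "(T1 t)\<^sup>2 \<le> (\<Sum>s<t. lm ^ (t - Suc s)) * (\<Sum>s<t. lm ^ (t - Suc s) * (\<eta> s)\<^sup>2)"
      unfolding T1_def by (rule CS_w) (use lm01 in simp)
    also have "\<dots> \<le> (1 / (1 - lm)) * (S2 t / lm)"
    proof (rule mult_mono)
      show "(\<Sum>s<t. lm ^ (t - Suc s)) \<le> 1 / (1 - lm)" using lm01 by (intro geo1) auto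
      have "(\<Sum>s<t. lm ^ (t - Suc s) * (\<eta> s)\<^sup>2) = (\<Sum>s<t. lm ^ (t - s) * (\<eta> s)\<^sup>2) / lm"
        by (rule shift_sum[OF lm01(1)])
      also have "\<dots> \<le> S2 t / lm" unfolding S2_def using lm01
        by (intro divide_right_mono sub_sum) auto
      finally show "(\<Sum>s<t. lm ^ (t - Suc s) * (\<eta> s)\<^sup>2) \<le> S2 t / lm" .
    qed (use lm01 S2nn in \<open>auto intro!: sum_nonneg\<close>)
    also have "\<dots> = S2 t / (lm * (1 - lm))" by simp
    finally show ?thesis .
  qed
  have S1le: "S1 t \<le> 1 / (1 - lm)" for t
  proof -
    have "S1 t \<le> (\<Sum>s=0..t. lm ^ (t - s))" unfolding S1_def
      using eta_range lm01 by (intro sum_mono) (simp add: mult_left_le)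
    also have "\<dots> \<le> 1 / (1 - lm)" using lm01 by (intro geo2) auto
    finally show ?thesis .
  qed
  have S1sq: "(S1 t)\<^sup>2 \<le> S2 t / (1 - lm)" for t
  proof -
    have "(S1 t)\<^sup>2 \<le> (\<Sum>s=0..t. lm ^ (t - s)) * S2 t"
      unfolding S1_def S2_def by (rule CS_w) (use lm01 in simp)
    also have "\<dots> \<le> (1 / (1 - lm)) * S2 t"
      using lm01 S2nn by (intro mult_right_mono geo2) auto
    finally show ?thesis by simp
  qed
  have devx': "norm (x i t - xbar t) \<le> N * D * \<kappa> * lm ^ t + (N * D * K / \<mu>) * T1 t" if i: "i < n" for i t
  proof -
    have "(\<Sum>s<t. N * (lm ^ (t - Suc s) / (1 - \<delta>)\<^sup>2) * (\<eta> s * K / \<mu>)) = (N * D * K / \<mu>) * T1 t"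
      unfolding T1_def sum_distrib_left D_def by (intro sum.cong refl) (simp add: field_simps)
    moreover have "N * (lm ^ t / (1 - \<delta>)\<^sup>2) * \<kappa> = N * D * \<kappa> * lm ^ t" unfolding D_def by (simp add: field_simps)
    ultimately show ?thesis using devx[OF i, of t] by simp
  qed
  have devy': "norm (y i t - ybar t) \<le> (2 * N * D * \<kappa>2) * T1 t" if i: "i < n" for i t
  proof -
    have "(\<Sum>s<t. N * (lm ^ (t - Suc s) / (1 - \<delta>)\<^sup>2) * (2 * \<kappa>2 * \<eta> s)) = (2 * N * D * \<kappa>2) * T1 t"
      unfolding T1_def sum_distrib_left D_def by (intro sum.cong refl) (simp add: field_simps)
    then show ?thesis using devy[OF i, of t] by simp
  qed
  define \<rho>1 where "\<rho>1 = sqrt m * N * \<kappa> * C"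
  define \<rho>2 where "\<rho>2 = (sqrt m * N powr (3/2) * h * \<kappa>2 * \<kappa>3 * C + sqrt m * N * \<kappa>1 * C) / (\<mu> * lm)"
  define \<rho>3 where "\<rho>3 = m * N\<^sup>2 * \<kappa>\<^sup>2 * C\<^sup>2
                  + (2 * m * N powr (5/2) * h * \<kappa> * \<kappa>2 * \<kappa>3 * C\<^sup>2 + 2 * m * N\<^sup>2 * \<kappa> * \<kappa>1 * C\<^sup>2)
                    / (\<mu> * lm * (1 - lm))"
  define \<rho>4 where "\<rho>4 = m * (N powr (3/2) * h * \<kappa>2 * \<kappa>3 * C + N * \<kappa>1 * C)\<^sup>2 / (\<mu>\<^sup>2 * lm\<^sup>2 * (1 - lm))"
  define \<rho>5 where "\<rho>5 = (sqrt N * h * \<kappa>2 * \<kappa>3 + \<kappa>1) / \<mu>"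
  define \<rho>6 where "\<rho>6 = (sqrt h * N powr (3/2) * C * \<kappa>2 + sqrt h * N * C * \<kappa>2) / lm"
  define \<rho>7 where "\<rho>7 = h * (N powr (3/2) * C * \<kappa>2 + N * C * \<kappa>2)\<^sup>2 / lm\<^sup>2"
  have sm1: "sqrt m \<ge> 1" using m1 by simp
  have sN1: "sqrt N \<ge> 1" using N1 by simp
  have sh1: "sqrt h \<ge> 1" using h1 by simp
  have N32: "N powr (3/2) = N * sqrt N"
  proof -
    have "N powr (3/2) = N powr (1 + 1/2)" by simp
    also have "\<dots> = N powr 1 * N powr (1/2)" by (rule powr_add)
    also have "\<dots> = N * sqrt N" using N1 by (simp add: powr_half_sqrt)
    finally show ?thesis .
  qed
  have N52: "N powr (5/2) = N * N * sqrt N"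
  proof -
    have "N powr (5/2) = N powr (2 + 1/2)" by simp
    also have "\<dots> = N powr 2 * N powr (1/2)" by (rule powr_add)
    also have "\<dots> = N * N * sqrt N" using N1 by (simp add: powr_half_sqrt power2_eq_square)
    finally show ?thesis .
  qed
  have NDC: "N * D \<le> N * C" using DC N1 by simp
  have DsC: "D \<le> sqrt m * C" using DC sm1 C_pos by (smt (verit) mult_le_cancel_right1)
  have r1: "N * D * \<kappa> \<le> \<rho>1"
  proof -
    have "N * D * \<kappa> \<le> N * (sqrt m * C) * \<kappa>" using DsC N1 k0 by (intro mult_right_mono mult_left_mono) auto
    then show ?thesis unfolding \<rho>1_def by (simp add: ac_simps)
  qed
  have r2: "N * D * K / (\<mu> * lm) \<le> \<rho>2"
  proof -
    have a: "N * D * (h * \<kappa>2 * \<kappa>3) \<le> (sqrt m * N powr (3/2) * C) * (h * \<kappa>2 * \<kappa>3)"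
    proof (rule mult_right_mono)
      have "N * D \<le> (N * sqrt N) * (sqrt m * C)"
        using DsC N1 sN1 D_pos by (intro mult_mono) auto
      then show "N * D \<le> sqrt m * N powr (3/2) * C" unfolding N32 by (simp add: ac_simps)
    qed (use h1 k20 k30 in simp)
    have b: "N * D * \<kappa>1 \<le> (sqrt m * N * C) * \<kappa>1"
      using DsC N1 k10 by (intro mult_right_mono) (auto simp: ac_simps)
    have "N * D * K \<le> sqrt m * N powr (3/2) * h * \<kappa>2 * \<kappa>3 * C + sqrt m * N * \<kappa>1 * C"
      using a b unfolding K_def by (simp add: algebra_simps)
    then show ?thesis unfolding \<rho>2_def using mu_pos lm01 by (intro divide_right_mono) auto
  qed
  have r0: "\<rho>1 \<ge> 0" "\<rho>2 \<ge> 0" using r1 r2 N1 D_pos k0 K0 mu_pos lm01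
    by (smt (verit) divide_nonneg_pos mult_nonneg_nonneg mult_pos_pos)+
  have smm: "sqrt m * sqrt m = m" using m1 by simp
  define A where "A = N powr (3/2) * h * \<kappa>2 * \<kappa>3 * C + N * \<kappa>1 * C"
  have r2A: "\<rho>2 = sqrt m * A / (\<mu> * lm)" unfolding \<rho>2_def A_def by (simp add: algebra_simps)
  have r1sq: "\<rho>1\<^sup>2 = m * N\<^sup>2 * \<kappa>\<^sup>2 * C\<^sup>2" unfolding \<rho>1_def using m1 by (simp add: power_mult_distrib)
  have r12: "\<rho>1 * \<rho>2 = m * (N * \<kappa> * C * A) / (\<mu> * lm)"
  proof -
    have "\<rho>1 * \<rho>2 = (sqrt m * sqrt m) * (N * \<kappa> * C * A) / (\<mu> * lm)" unfolding r2A \<rho>1_def by (simp add: ac_simps)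
    then show ?thesis using smm by simp
  qed
  have NA: "N * \<kappa> * C * A = N powr (5/2) * h * \<kappa> * \<kappa>2 * \<kappa>3 * C\<^sup>2 + N\<^sup>2 * \<kappa> * \<kappa>1 * C\<^sup>2"
    unfolding A_def N32 N52 by (simp add: power2_eq_square algebra_simps)
  have r3: "\<rho>3 = \<rho>1\<^sup>2 + 2 * \<rho>1 * \<rho>2 / (1 - lm)"
  proof -
    have "2 * \<rho>1 * \<rho>2 / (1 - lm) = 2 * m * (N * \<kappa> * C * A) / (\<mu> * lm * (1 - lm))"
      unfolding mult.assoc[of 2] r12 by simp
    also have "\<dots> = (2 * m * N powr (5/2) * h * \<kappa> * \<kappa>2 * \<kappa>3 * C\<^sup>2 + 2 * m * N\<^sup>2 * \<kappa> * \<kappa>1 * C\<^sup>2) / (\<mu> * lm * (1 - lm))"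
      unfolding NA by (simp add: algebra_simps)
    finally show ?thesis unfolding \<rho>3_def r1sq by simp
  qed
  have r4: "\<rho>4 = \<rho>2\<^sup>2 / (1 - lm)"
  proof -
    have "\<rho>2\<^sup>2 = (sqrt m)\<^sup>2 * A\<^sup>2 / (\<mu>\<^sup>2 * lm\<^sup>2)" unfolding r2A by (simp add: power_mult_distrib power_divide)
    then show ?thesis unfolding \<rho>4_def A_def[symmetric] using m1 by simp
  qed
  have r5: "K / \<mu> \<le> \<rho>5"
  proof -
    have "0 \<le> h * \<kappa>2 * \<kappa>3" using h1 k20 k30 by simp
    then have "h * \<kappa>2 * \<kappa>3 \<le> sqrt N * (h * \<kappa>2 * \<kappa>3)"
      using mult_right_mono[of 1 "sqrt N" "h * \<kappa>2 * \<kappa>3"] sN1 by simp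
    then show ?thesis unfolding K_def \<rho>5_def using mu_pos by (intro divide_right_mono) (auto simp: ac_simps)
  qed
  have r6: "2 * N * D * \<kappa>2 / lm \<le> \<rho>6"
  proof -
    have a: "N * D * \<kappa>2 \<le> sqrt h * N powr (3/2) * C * \<kappa>2"
    proof -
      have "N * D \<le> (N * sqrt N) * (sqrt h * C)"
        using DC sh1 N1 sN1 D_pos C_pos by (intro mult_mono) (auto simp: mult_le_cancel_right1 order_trans[OF _ mult_right_mono[of 1 "sqrt h" C, simplified]])
      from mult_right_mono[OF this k20] show ?thesis unfolding N32 by (simp add: ac_simps)
    qed
    have b: "N * D * \<kappa>2 \<le> sqrt h * N * C * \<kappa>2"
    proof -
      have "D \<le> sqrt h * C" using DC sh1 C_pos by (smt (verit) mult_le_cancel_right1)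
      then have "N * D \<le> N * (sqrt h * C)" using N1 by simp
      from mult_right_mono[OF this k20] show ?thesis by (simp add: ac_simps)
    qed
    show ?thesis unfolding \<rho>6_def using a b lm01 by (intro divide_right_mono) auto
  qed
  have r7: "(2 * N * D * \<kappa>2)\<^sup>2 / (lm * (1 - lm)) \<le> \<rho>7"
  proof -
    have hN: "4 \<le> h * (sqrt N + 1)\<^sup>2"
    proof -
      have "2\<^sup>2 \<le> (sqrt N + 1)\<^sup>2" using sN1 by (intro power_mono) auto
      then have "1 * 4 \<le> h * (sqrt N + 1)\<^sup>2" using h1 by (intro mult_mono) auto
      then show ?thesis by simp
    qed
    have dd: "\<delta>\<^sup>2 \<le> 1 - lm"
    proof -
      have "\<delta> * \<delta> \<le> \<delta> * (M.B0 * (1 - lm))" using dl by (intro mult_left_mono) auto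
      also have "\<dots> = (\<delta> * M.B0) * (1 - lm)" by simp
      also have "\<dots> \<le> 1 * (1 - lm)" using dl lm01 by (intro mult_right_mono) auto
      finally show ?thesis by (simp add: power2_eq_square)
    qed
    have Csq: "4 / (\<delta>\<^sup>2 * (1 - \<delta>)\<^sup>2) \<le> C\<^sup>2"
    proof -
      have "(2 / (\<delta> * (1 - \<delta>)))\<^sup>2 \<le> C\<^sup>2" using C_ge dl by (intro power_mono) auto
      then show ?thesis by (simp add: power_divide power_mult_distrib)
    qed
    have key: "D\<^sup>2 * lm \<le> C\<^sup>2 * (1 - lm)"
    proof -
      have "D\<^sup>2 * lm \<le> D\<^sup>2" using lm01 by (simp add: mult_left_le)
      also have "\<dots> \<le> 4 * D" using D4 D_pos by (simp add: power2_eq_square)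
      also have "\<dots> = 4 / (\<delta>\<^sup>2 * (1 - \<delta>)\<^sup>2) * \<delta>\<^sup>2" unfolding D_def using dl by (simp add: field_simps)
      also have "\<dots> \<le> C\<^sup>2 * (1 - lm)" using Csq dd by (intro mult_mono) auto
      finally show ?thesis .
    qed
    have key2: "4 * D\<^sup>2 * lm \<le> h * (sqrt N + 1)\<^sup>2 * C\<^sup>2 * (1 - lm)"
    proof -
      have "4 * (D\<^sup>2 * lm) \<le> (h * (sqrt N + 1)\<^sup>2) * (C\<^sup>2 * (1 - lm))"
        by (rule mult_mono[OF hN key]) (use lm01 h1 in auto)
      then show ?thesis by (simp add: ac_simps)
    qed
    have e7: "\<rho>7 = (N\<^sup>2 * \<kappa>2\<^sup>2) * (h * (sqrt N + 1)\<^sup>2 * C\<^sup>2 / lm\<^sup>2)"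
      unfolding \<rho>7_def N32 by (simp add: field_simps power2_eq_square)
    have eL: "(2 * N * D * \<kappa>2)\<^sup>2 / (lm * (1 - lm)) = (N\<^sup>2 * \<kappa>2\<^sup>2) * ((4 * D\<^sup>2 * lm) / (lm\<^sup>2 * (1 - lm)))"
      using lm01 by (simp add: field_simps power2_eq_square)
    have "(4 * D\<^sup>2 * lm) / (lm\<^sup>2 * (1 - lm)) \<le> (h * (sqrt N + 1)\<^sup>2 * C\<^sup>2 * (1 - lm)) / (lm\<^sup>2 * (1 - lm))"
      using key2 lm01 by (intro divide_right_mono) auto
    also have "\<dots> = h * (sqrt N + 1)\<^sup>2 * C\<^sup>2 / lm\<^sup>2" using lm01 by simp
    finally show ?thesis unfolding e7 eL by (intro mult_left_mono) auto
  qed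
  have cl1: "norm (x i t - xbar t) \<le> \<rho>1 * lm ^ t + \<rho>2 * S1 t" if i: "i < n" for i t
  proof -
    have "N * D * \<kappa> * lm ^ t \<le> \<rho>1 * lm ^ t" using r1 lm01 by (intro mult_right_mono) auto
    moreover have "(N * D * K / \<mu>) * T1 t \<le> (N * D * K / \<mu>) * (S1 t / lm)"
      using T1S1 N1 D_pos K0 mu_pos by (intro mult_left_mono) auto
    moreover have "(N * D * K / \<mu>) * (S1 t / lm) = (N * D * K / (\<mu> * lm)) * S1 t" by simp
    moreover have "(N * D * K / (\<mu> * lm)) * S1 t \<le> \<rho>2 * S1 t" using r2 S1nn by (intro mult_right_mono) auto
    ultimately show ?thesis using devx'[OF i, of t] by linarith
  qed
  have cl2: "(norm (x i t - xbar t))\<^sup>2 \<le> \<rho>3 * lm ^ t + \<rho>4 * S2 t" if i: "i < n" for i t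
  proof -
    have lt: "0 \<le> lm ^ t" "lm ^ t \<le> 1" using lm01 by (auto simp: power_le_one)
    have "(norm (x i t - xbar t))\<^sup>2 \<le> (\<rho>1 * lm ^ t + \<rho>2 * S1 t)\<^sup>2"
      using cl1[OF i] by (intro power_mono) auto
    also have "\<dots> = \<rho>1\<^sup>2 * (lm ^ t * lm ^ t) + 2 * \<rho>1 * \<rho>2 * (lm ^ t * S1 t) + \<rho>2\<^sup>2 * (S1 t)\<^sup>2"
      by (simp add: power2_eq_square algebra_simps)
    also have "\<dots> \<le> \<rho>1\<^sup>2 * lm ^ t + 2 * \<rho>1 * \<rho>2 * (lm ^ t * (1 / (1 - lm))) + \<rho>2\<^sup>2 * (S2 t / (1 - lm))"
    proof -
      have "\<rho>1\<^sup>2 * (lm ^ t * lm ^ t) \<le> \<rho>1\<^sup>2 * lm ^ t"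
        using lt by (intro mult_left_mono) (auto simp: mult_left_le)
      moreover have "2 * \<rho>1 * \<rho>2 * (lm ^ t * S1 t) \<le> 2 * \<rho>1 * \<rho>2 * (lm ^ t * (1 / (1 - lm)))"
        using lt S1le r0 by (intro mult_left_mono) auto
      moreover have "\<rho>2\<^sup>2 * (S1 t)\<^sup>2 \<le> \<rho>2\<^sup>2 * (S2 t / (1 - lm))"
        using S1sq by (intro mult_left_mono) auto
      ultimately show ?thesis by linarith
    qed
    also have "\<dots> = \<rho>3 * lm ^ t + \<rho>4 * S2 t" unfolding r3 r4 by (simp add: algebra_simps)
    finally show ?thesis .
  qed
  have cl3: "norm (x i (Suc t) - x i t) \<le> 2 * \<rho>1 * lm ^ t + 2 * \<rho>2 * S1 t + \<rho>5 * \<eta> t" if i: "i < n" for i t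
  proof -
    define z where "z = (\<Sum>l<n. a i l t *\<^sub>R x l t)"
    have "z - xbar t = (\<Sum>l<n. a i l t *\<^sub>R (x l t - xbar t))"
      unfolding z_def by (simp add: scaleR_diff_right sum_subtractf scaleR_sum_left[symmetric] row_stoch[OF i])
    then have "norm (z - xbar t) \<le> (\<Sum>l<n. a i l t * norm (x l t - xbar t))"
      by (simp add: order_trans[OF norm_sum] M.a_nonneg)
    also have "\<dots> \<le> (\<Sum>l<n. a i l t * (\<rho>1 * lm ^ t + \<rho>2 * S1 t))"
      by (intro sum_mono mult_left_mono) (use cl1 M.a_nonneg in auto)
    also have "\<dots> = \<rho>1 * lm ^ t + \<rho>2 * S1 t" using row_stoch[OF i] by (simp add: sum_distrib_right[symmetric])
    finally have zb: "norm (z - xbar t) \<le> \<rho>1 * lm ^ t + \<rho>2 * S1 t" .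
    have exz: "ex i t = x i (Suc t) - z" unfolding ex_def z_def ..
    have eqd: "x i (Suc t) - x i t = ex i t + (z - xbar t) + (xbar t - x i t)" unfolding exz by (simp add: algebra_simps)
    have "norm (x i (Suc t) - x i t) \<le> norm (ex i t) + norm (z - xbar t) + norm (xbar t - x i t)"
      unfolding eqd using norm_triangle_ineq[of "ex i t + (z - xbar t)" "xbar t - x i t"] norm_triangle_ineq[of "ex i t" "z - xbar t"]
      by linarith
    moreover have "norm (ex i t) \<le> \<rho>5 * \<eta> t"
    proof -
      have "\<eta> t * K / \<mu> = \<eta> t * (K / \<mu>)" by simp
      also have "\<dots> \<le> \<eta> t * \<rho>5" using r5 eta0 by (intro mult_left_mono) auto
      finally show ?thesis using exb[OF i, of t] by (simp add: mult.commute)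
    qed
    moreover have "norm (xbar t - x i t) \<le> \<rho>1 * lm ^ t + \<rho>2 * S1 t" using cl1[OF i] by (simp add: norm_minus_commute)
    ultimately show ?thesis using zb by linarith
  qed
  have cl4: "norm (y i t - ybar t) \<le> \<rho>6 * S1 t" if i: "i < n" for i t
  proof -
    have "(2 * N * D * \<kappa>2) * T1 t \<le> (2 * N * D * \<kappa>2) * (S1 t / lm)"
      using T1S1 N1 D_pos k20 by (intro mult_left_mono) auto
    also have "\<dots> = (2 * N * D * \<kappa>2 / lm) * S1 t" by simp
    also have "\<dots> \<le> \<rho>6 * S1 t" using r6 S1nn by (intro mult_right_mono) auto
    finally show ?thesis using devy'[OF i, of t] by linarith
  qed
  have cl5: "(norm (y i t - ybar t))\<^sup>2 \<le> \<rho>7 * S2 t" if i: "i < n" for i t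
  proof -
    have "(norm (y i t - ybar t))\<^sup>2 \<le> ((2 * N * D * \<kappa>2) * T1 t)\<^sup>2"
      using devy'[OF i, of t] by (intro power_mono) auto
    also have "\<dots> = (2 * N * D * \<kappa>2)\<^sup>2 * (T1 t)\<^sup>2" by (simp add: power_mult_distrib)
    also have "\<dots> \<le> (2 * N * D * \<kappa>2)\<^sup>2 * (S2 t / (lm * (1 - lm)))" using T1sq by (intro mult_left_mono) auto
    also have "\<dots> = ((2 * N * D * \<kappa>2)\<^sup>2 / (lm * (1 - lm))) * S2 t" by simp
    also have "\<dots> \<le> \<rho>7 * S2 t" using r7 S2nn by (intro mult_right_mono) auto
    finally show ?thesis .
  qed
  show ?thesis
    unfolding Let_def m_def[symmetric] h_def[symmetric] N_def[symmetric] lm_def[symmetric] C_def[symmetric]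
    using cl1 cl2 cl3 cl4 cl5
    unfolding \<rho>1_def \<rho>2_def \<rho>3_def \<rho>4_def \<rho>5_def \<rho>6_def \<rho>7_def xbar_def ybar_def S1_def S2_def
    by blast
qed

end
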